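(* Let $G$ be a second countable, locally Hausdorff, locally compact groupoid with a Haar system, let $Q$ be a locally compact group with identity $e$, and let $c:G\to Q$ be a continuous homomorphism such that $c^{-1}(e)$ is amenable. Let $\tilde s:G\to G^{(0)}\times Q$, $\tilde s(\gamma)=(s(\gamma),c(\gamma))$, and $Y=\tilde s(G)$. Then the Borel groupoids $G(c)|_Y$ and $c^{-1}(e)$ are Borel equivalent.
   Context: The skew-product groupoid is $G(c)=\{(a,\gamma,b)\in Q\times G\times Q: b=ac(\gamma)\}$ with $(a,\eta,b)(b,\gamma,d)=(a,\eta\gamma,d)$, $(a,\gamma,b)^{-1}=(b,\gamma^{-1},a)$, unit space $G^{(0)}\times Q$, $r(a,\gamma,b)=(r(\gamma),a)$, $s(a,\gamma,b)=(s(\gamma),b)$. $G(c)|_Y=\{g\in G(c): r(g),s(g)\in Y\}$. All groupoids carry the Borel structures induced by their topologies. A $(G_1,G_2)$-Borel equivalence between Borel groupoids is a Borel space $Z$ which is a free and proper left Borel $G_1$-space and a free and proper right Borel $G_2$-space, the actions commute, the moment map $Z\to G_1^{(0)}$ induces a Borel isomorphism $Z/G_2\cong G_1^{(0)}$, and the moment map $Z\to G_2^{(0)}$ induces a Borel isomorphism $G_1\backslash Z\cong G_2^{(0)}$. A left Borel $G_1$-space $Z$ is proper if there is a Borel family $\{m^z\}_{z\in Z}$ of probability measures on $G_1$ with $m^z$ supported on $G_1^{r(z)}$ and $\gamma\cdot m^z=m^{\gamma\cdot z}$ (right actions analogously). *)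

theory Defs
  imports "HOL-Probability.Probability"
begin

record ('g,'u) tgroupoid =
  g_arr  :: "'g set"
  g_obj  :: "'u set"
  g_r    :: "'g \<Rightarrow> 'u"
  g_s    :: "'g \<Rightarrow> 'u"
  g_mul  :: "'g \<Rightarrow> 'g \<Rightarrow> 'g"   \<comment> \<open>g_mul x y defined when g_s x = g_r y\<close>
  g_inv  :: "'g \<Rightarrow> 'g"
  g_id   :: "'u \<Rightarrow> 'g"
  g_top  :: "'g topology"
  g_otop :: "'u topology"

definition groupoid :: "('g,'u,'x) tgroupoid_scheme \<Rightarrow> bool" where
  "groupoid G \<longleftrightarrow>
     (\<forall>x\<in>g_arr G. g_r G x \<in> g_obj G \<and> g_s G x \<in> g_obj G) \<and>
     (\<forall>u\<in>g_obj G. g_id G u \<in> g_arr G \<and> g_r G (g_id G u) = u \<and> g_s G (g_id G u) = u) \<and>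
     (\<forall>x\<in>g_arr G. \<forall>y\<in>g_arr G. g_s G x = g_r G y \<longrightarrow>
        g_mul G x y \<in> g_arr G \<and> g_r G (g_mul G x y) = g_r G x \<and> g_s G (g_mul G x y) = g_s G y) \<and>
     (\<forall>x\<in>g_arr G. \<forall>y\<in>g_arr G. \<forall>z\<in>g_arr G. g_s G x = g_r G y \<longrightarrow> g_s G y = g_r G z \<longrightarrow>
        g_mul G (g_mul G x y) z = g_mul G x (g_mul G y z)) \<and>
     (\<forall>x\<in>g_arr G. g_mul G (g_id G (g_r G x)) x = x \<and> g_mul G x (g_id G (g_s G x)) = x) \<and>
     (\<forall>x\<in>g_arr G. g_inv G x \<in> g_arr G \<and> g_r G (g_inv G x) = g_s G x \<and> g_s G (g_inv G x) = g_r G x \<and>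
        g_mul G (g_inv G x) x = g_id G (g_s G x) \<and> g_mul G x (g_inv G x) = g_id G (g_r G x))"

definition composable :: "('g,'u,'x) tgroupoid_scheme \<Rightarrow> ('g \<times> 'g) set" where
  "composable G = {(x,y). x \<in> g_arr G \<and> y \<in> g_arr G \<and> g_s G x = g_r G y}"

text \<open>Unit space is identified with its image under g_id: g_id is a topological embedding.\<close>
definition topological_groupoid :: "('g,'u,'x) tgroupoid_scheme \<Rightarrow> bool" where
  "topological_groupoid G \<longleftrightarrow> groupoid G \<and>
     topspace (g_top G) = g_arr G \<and> topspace (g_otop G) = g_obj G \<and>
     continuous_map (g_top G) (g_otop G) (g_r G) \<and>
     continuous_map (g_top G) (g_otop G) (g_s G) \<and>
     continuous_map (g_top G) (g_top G) (g_inv G) \<and>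
     continuous_map (subtopology (prod_topology (g_top G) (g_top G)) (composable G)) (g_top G)
        (\<lambda>(x,y). g_mul G x y) \<and>
     homeomorphic_map (g_otop G) (subtopology (g_top G) (g_id G ` g_obj G)) (g_id G)"

definition range_fibre :: "('g,'u,'x) tgroupoid_scheme \<Rightarrow> 'u \<Rightarrow> 'g set" where
  "range_fibre G u = {x \<in> g_arr G. g_r G x = u}"

definition source_fibre :: "('g,'u,'x) tgroupoid_scheme \<Rightarrow> 'u \<Rightarrow> 'g set" where
  "source_fibre G u = {x \<in> g_arr G. g_s G x = u}"

definition locally_Hausdorff :: "'a topology \<Rightarrow> bool" where
  "locally_Hausdorff X \<longleftrightarrow>
     (\<forall>x\<in>topspace X. \<exists>U. openin X U \<and> x \<in> U \<and> Hausdorff_space (subtopology X U))"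

text \<open>Local compactness for possibly non-Hausdorff spaces: every point has a neighbourhood
  base of compact Hausdorff sets.\<close>
definition locally_compact_nH :: "'a topology \<Rightarrow> bool" where
  "locally_compact_nH X \<longleftrightarrow>
     (\<forall>x U. openin X U \<and> x \<in> U \<longrightarrow>
        (\<exists>V K. openin X V \<and> compactin X K \<and> Hausdorff_space (subtopology X K) \<and>
               x \<in> V \<and> V \<subseteq> K \<and> K \<subseteq> U))"

definition lc_groupoid :: "('g,'u,'x) tgroupoid_scheme \<Rightarrow> bool" where
  "lc_groupoid G \<longleftrightarrow> topological_groupoid G \<and> locally_compact_nH (g_top G) \<and>
     Hausdorff_space (g_otop G) \<and>
     (\<forall>u\<in>g_obj G. Hausdorff_space (subtopology (g_top G) (range_fibre G u)))"

definition borel_of :: "'a topology \<Rightarrow> 'a measure" where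
  "borel_of X = sigma (topspace X) {U. openin X U}"

text \<open>Generators of C_c(G) for a locally Hausdorff space: functions that are continuous with
  compact support on some open Hausdorff subset U and vanish off U (C_c(G) is their span).\<close>
definition cc_gen :: "'a topology \<Rightarrow> ('a \<Rightarrow> real) \<Rightarrow> bool" where
  "cc_gen X f \<longleftrightarrow> (\<exists>U K. openin X U \<and> Hausdorff_space (subtopology X U) \<and>
      continuous_map (subtopology X U) euclideanreal f \<and>
      compactin X K \<and> K \<subseteq> U \<and> (\<forall>x. x \<notin> K \<longrightarrow> f x = 0))"

definition haar_system :: "('g,'u,'x) tgroupoid_scheme \<Rightarrow> ('u \<Rightarrow> 'g measure) \<Rightarrow> bool" where
  "haar_system G lam \<longleftrightarrow>
     (\<forall>u\<in>g_obj G.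
        sets (lam u) = sets (borel_of (g_top G)) \<and>
        (\<forall>x\<in>g_arr G. \<exists>V. openin (g_top G) V \<and> x \<in> V \<and> emeasure (lam u) V < \<infinity>) \<and>
        emeasure (lam u) (g_arr G - range_fibre G u) = 0 \<and>
        (\<forall>V. openin (g_top G) V \<and> V \<inter> range_fibre G u \<noteq> {} \<longrightarrow> emeasure (lam u) V > 0)) \<and>
     (\<forall>x\<in>g_arr G. \<forall>E\<in>sets (borel_of (g_top G)).
        emeasure (lam (g_s G x)) {y \<in> range_fibre G (g_s G x). g_mul G x y \<in> E}
          = emeasure (lam (g_r G x)) E) \<and>
     (\<forall>f. cc_gen (g_top G) f \<longrightarrow>
        continuous_map (g_otop G) euclideanreal (\<lambda>u. integral\<^sup>L (lam u) f))"

definition has_haar_system :: "('g,'u,'x) tgroupoid_scheme \<Rightarrow> bool" where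
  "has_haar_system G \<longleftrightarrow> (\<exists>lam. haar_system G lam)"

text \<open>Topological amenability (Anantharaman-Delaroche--Renault): a (sequential, by second
  countability) topological approximate invariant mean.\<close>
definition inv_defect ::
  "('g,'u,'x) tgroupoid_scheme \<Rightarrow> ('u \<Rightarrow> 'g measure) \<Rightarrow> 'g \<Rightarrow> real" where
  "inv_defect G m x = (SUP A\<in>sets (borel_of (g_top G)).
      \<bar>measure (m (g_s G x)) {y \<in> range_fibre G (g_s G x). g_mul G x y \<in> A}
        - measure (m (g_r G x)) A\<bar>)"

definition top_amenable :: "('g,'u,'x) tgroupoid_scheme \<Rightarrow> bool" where
  "top_amenable G \<longleftrightarrow> (\<exists>m :: nat \<Rightarrow> 'u \<Rightarrow> 'g measure.
     (\<forall>i. \<forall>u\<in>g_obj G. prob_space (m i u) \<and> sets (m i u) = sets (borel_of (g_top G)) \<and>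
            emeasure (m i u) (range_fibre G u) = 1) \<and>
     (\<forall>i f. cc_gen (g_top G) f \<longrightarrow>
            continuous_map (g_otop G) euclideanreal (\<lambda>u. integral\<^sup>L (m i u) f)) \<and>
     (\<forall>K. compactin (g_top G) K \<longrightarrow>
        (\<forall>\<epsilon>>0. eventually (\<lambda>i. \<forall>x\<in>K. inv_defect G (m i) x < \<epsilon>) sequentially)))"

definition groupoid_hom_to :: "('g,'u,'x) tgroupoid_scheme \<Rightarrow> ('g \<Rightarrow> 'q::group_add) \<Rightarrow> bool" where
  "groupoid_hom_to G c \<longleftrightarrow>
     (\<forall>x\<in>g_arr G. \<forall>y\<in>g_arr G. g_s G x = g_r G y \<longrightarrow> c (g_mul G x y) = c x + c y)"

text \<open>G(c) = {(a,x,b). b = a c(x)}; Q is written additively (not necessarily abelian), e = 0.\<close>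
definition skew :: "('g,'u,'x) tgroupoid_scheme \<Rightarrow> ('g \<Rightarrow> 'q::topological_group_add)
                      \<Rightarrow> ('q \<times> 'g \<times> 'q, 'u \<times> 'q) tgroupoid" where
  "skew G c =
    \<lparr> g_arr = {(a,x,b). x \<in> g_arr G \<and> b = a + c x},
      g_obj = g_obj G \<times> UNIV,
      g_r = (\<lambda>(a,x,b). (g_r G x, a)),
      g_s = (\<lambda>(a,x,b). (g_s G x, b)),
      g_mul = (\<lambda>(a,y,b) (b',x,d). (a, g_mul G y x, d)),
      g_inv = (\<lambda>(a,x,b). (b, g_inv G x, a)),
      g_id = (\<lambda>(u,a). (a, g_id G u, a)),
      g_top = subtopology (prod_topology euclidean (prod_topology (g_top G) euclidean))
                {(a,x,b). x \<in> g_arr G \<and> b = a + c x},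
      g_otop = prod_topology (g_otop G) euclidean \<rparr>"

definition restrict_groupoid :: "('g,'u) tgroupoid \<Rightarrow> 'u set \<Rightarrow> ('g,'u) tgroupoid" where
  "restrict_groupoid G Y =
    (let A = {x \<in> g_arr G. g_r G x \<in> Y \<and> g_s G x \<in> Y} in
     G\<lparr> g_arr := A, g_obj := Y, g_top := subtopology (g_top G) A,
        g_otop := subtopology (g_otop G) Y \<rparr>)"

text \<open>c^{-1}(e) as a subgroupoid with the subspace topology (its unit space is G^(0)).\<close>
definition kernel_groupoid :: "('g,'u) tgroupoid \<Rightarrow> ('g \<Rightarrow> 'q::group_add) \<Rightarrow> ('g,'u) tgroupoid" where
  "kernel_groupoid G c =
    (let A = {x \<in> g_arr G. c x = 0} in G\<lparr> g_arr := A, g_top := subtopology (g_top G) A \<rparr>)"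

definition tilde_s :: "('g,'u,'x) tgroupoid_scheme \<Rightarrow> ('g \<Rightarrow> 'q) \<Rightarrow> 'g \<Rightarrow> 'u \<times> 'q" where
  "tilde_s G c x = (g_s G x, c x)"

definition left_borel_action ::
  "('g,'u,'x) tgroupoid_scheme \<Rightarrow> 'z measure \<Rightarrow> ('z \<Rightarrow> 'u) \<Rightarrow> ('g \<Rightarrow> 'z \<Rightarrow> 'z) \<Rightarrow> bool" where
  "left_borel_action G Z \<rho> act \<longleftrightarrow>
     \<rho> \<in> measurable Z (borel_of (g_otop G)) \<and>
     (\<forall>z\<in>space Z. \<forall>x\<in>g_arr G. g_s G x = \<rho> z \<longrightarrow> act x z \<in> space Z \<and> \<rho> (act x z) = g_r G x) \<and>
     (\<forall>z\<in>space Z. act (g_id G (\<rho> z)) z = z) \<and>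
     (\<forall>z\<in>space Z. \<forall>x\<in>g_arr G. \<forall>y\<in>g_arr G. g_s G x = g_r G y \<longrightarrow> g_s G y = \<rho> z \<longrightarrow>
        act (g_mul G x y) z = act x (act y z)) \<and>
     (\<lambda>(x,z). act x z) \<in> measurable
        (restrict_space (borel_of (g_top G) \<Otimes>\<^sub>M Z)
           {(x,z). x \<in> g_arr G \<and> z \<in> space Z \<and> g_s G x = \<rho> z}) Z"

definition right_borel_action ::
  "('g,'u,'x) tgroupoid_scheme \<Rightarrow> 'z measure \<Rightarrow> ('z \<Rightarrow> 'u) \<Rightarrow> ('z \<Rightarrow> 'g \<Rightarrow> 'z) \<Rightarrow> bool" where
  "right_borel_action G Z \<sigma> act \<longleftrightarrow>
     \<sigma> \<in> measurable Z (borel_of (g_otop G)) \<and>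
     (\<forall>z\<in>space Z. \<forall>x\<in>g_arr G. \<sigma> z = g_r G x \<longrightarrow> act z x \<in> space Z \<and> \<sigma> (act z x) = g_s G x) \<and>
     (\<forall>z\<in>space Z. act z (g_id G (\<sigma> z)) = z) \<and>
     (\<forall>z\<in>space Z. \<forall>x\<in>g_arr G. \<forall>y\<in>g_arr G. \<sigma> z = g_r G x \<longrightarrow> g_s G x = g_r G y \<longrightarrow>
        act z (g_mul G x y) = act (act z x) y) \<and>
     (\<lambda>(z,x). act z x) \<in> measurable
        (restrict_space (Z \<Otimes>\<^sub>M borel_of (g_top G))
           {(z,x). x \<in> g_arr G \<and> z \<in> space Z \<and> \<sigma> z = g_r G x}) Z"

definition left_free :: "('g,'u,'x) tgroupoid_scheme \<Rightarrow> 'z measure \<Rightarrow> ('z \<Rightarrow> 'u) \<Rightarrow> ('g \<Rightarrow> 'z \<Rightarrow> 'z) \<Rightarrow> bool" where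
  "left_free G Z \<rho> act \<longleftrightarrow>
     (\<forall>z\<in>space Z. \<forall>x\<in>g_arr G. g_s G x = \<rho> z \<longrightarrow> act x z = z \<longrightarrow> x = g_id G (\<rho> z))"

definition right_free :: "('g,'u,'x) tgroupoid_scheme \<Rightarrow> 'z measure \<Rightarrow> ('z \<Rightarrow> 'u) \<Rightarrow> ('z \<Rightarrow> 'g \<Rightarrow> 'z) \<Rightarrow> bool" where
  "right_free G Z \<sigma> act \<longleftrightarrow>
     (\<forall>z\<in>space Z. \<forall>x\<in>g_arr G. \<sigma> z = g_r G x \<longrightarrow> act z x = z \<longrightarrow> x = g_id G (\<sigma> z))"

text \<open>Proper: a Borel family of probability measures m^z on G, supported on G^{r(z)},
  with x . m^z = m^{x . z} (the translate x . m is the image of m under y |-> x y).\<close>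
definition left_proper :: "('g,'u,'x) tgroupoid_scheme \<Rightarrow> 'z measure \<Rightarrow> ('z \<Rightarrow> 'u) \<Rightarrow> ('g \<Rightarrow> 'z \<Rightarrow> 'z) \<Rightarrow> bool" where
  "left_proper G Z \<rho> act \<longleftrightarrow> (\<exists>m :: 'z \<Rightarrow> 'g measure.
     (\<forall>z\<in>space Z. prob_space (m z) \<and> sets (m z) = sets (borel_of (g_top G)) \<and>
        emeasure (m z) (range_fibre G (\<rho> z)) = 1) \<and>
     (\<forall>A\<in>sets (borel_of (g_top G)). (\<lambda>z. emeasure (m z) A) \<in> borel_measurable Z) \<and>
     (\<forall>z\<in>space Z. \<forall>x\<in>g_arr G. g_s G x = \<rho> z \<longrightarrow> (\<forall>A\<in>sets (borel_of (g_top G)).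
        emeasure (m (act x z)) A = emeasure (m z) {y \<in> range_fibre G (g_s G x). g_mul G x y \<in> A})))"

definition right_proper :: "('g,'u,'x) tgroupoid_scheme \<Rightarrow> 'z measure \<Rightarrow> ('z \<Rightarrow> 'u) \<Rightarrow> ('z \<Rightarrow> 'g \<Rightarrow> 'z) \<Rightarrow> bool" where
  "right_proper G Z \<sigma> act \<longleftrightarrow> (\<exists>m :: 'z \<Rightarrow> 'g measure.
     (\<forall>z\<in>space Z. prob_space (m z) \<and> sets (m z) = sets (borel_of (g_top G)) \<and>
        emeasure (m z) (source_fibre G (\<sigma> z)) = 1) \<and>
     (\<forall>A\<in>sets (borel_of (g_top G)). (\<lambda>z. emeasure (m z) A) \<in> borel_measurable Z) \<and>
     (\<forall>z\<in>space Z. \<forall>x\<in>g_arr G. \<sigma> z = g_r G x \<longrightarrow> (\<forall>A\<in>sets (borel_of (g_top G)).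
        emeasure (m (act z x)) A = emeasure (m z) {y \<in> source_fibre G (g_r G x). g_mul G y x \<in> A})))"

text \<open>The map f : Z -> M, constant exactly on the classes of the orbit relation R, induces a
  Borel isomorphism Z/R = M for the quotient Borel structure on Z/R (a subset of Z/R is Borel
  iff its preimage in Z is Borel).\<close>
definition induces_quotient_borel_iso ::
  "'z measure \<Rightarrow> ('z \<Rightarrow> 'z \<Rightarrow> bool) \<Rightarrow> ('z \<Rightarrow> 'u) \<Rightarrow> 'u measure \<Rightarrow> bool" where
  "induces_quotient_borel_iso Z R f M \<longleftrightarrow>
     (\<forall>z\<in>space Z. \<forall>z'\<in>space Z. f z = f z' \<longleftrightarrow> R z z') \<and>
     f ` space Z = space M \<and>
     f \<in> measurable Z M \<and>
     (\<forall>S\<in>sets Z. (\<forall>z\<in>S. \<forall>z'\<in>space Z. R z z' \<longrightarrow> z' \<in> S) \<longrightarrow> f ` S \<in> sets M)"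

definition borel_equivalence ::
  "('g1,'u1,'x1) tgroupoid_scheme \<Rightarrow> ('g2,'u2,'x2) tgroupoid_scheme \<Rightarrow> 'z measure \<Rightarrow>
   ('z \<Rightarrow> 'u1) \<Rightarrow> ('g1 \<Rightarrow> 'z \<Rightarrow> 'z) \<Rightarrow> ('z \<Rightarrow> 'u2) \<Rightarrow> ('z \<Rightarrow> 'g2 \<Rightarrow> 'z) \<Rightarrow> bool" where
  "borel_equivalence G1 G2 Z \<rho> la \<sigma> ra \<longleftrightarrow>
     left_borel_action G1 Z \<rho> la \<and> left_free G1 Z \<rho> la \<and> left_proper G1 Z \<rho> la \<and>
     right_borel_action G2 Z \<sigma> ra \<and> right_free G2 Z \<sigma> ra \<and> right_proper G2 Z \<sigma> ra \<and>
     (\<forall>z\<in>space Z. \<forall>x\<in>g_arr G1. \<forall>y\<in>g_arr G2. g_s G1 x = \<rho> z \<longrightarrow> \<sigma> z = g_r G2 y \<longrightarrow>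
        \<rho> (ra z y) = \<rho> z \<and> \<sigma> (la x z) = \<sigma> z \<and> ra (la x z) y = la x (ra z y)) \<and>
     induces_quotient_borel_iso Z
        (\<lambda>z z'. \<exists>y\<in>g_arr G2. \<sigma> z = g_r G2 y \<and> z' = ra z y) \<rho> (borel_of (g_otop G1)) \<and>
     induces_quotient_borel_iso Z
        (\<lambda>z z'. \<exists>x\<in>g_arr G1. g_s G1 x = \<rho> z \<and> z' = la x z) \<sigma> (borel_of (g_otop G2))"

definition borel_equivalent ::
  "('g1,'u1,'x1) tgroupoid_scheme \<Rightarrow> ('g2,'u2,'x2) tgroupoid_scheme \<Rightarrow> 'z itself \<Rightarrow> bool" where
  "borel_equivalent G1 G2 _ \<longleftrightarrow>
     (\<exists>(Z :: 'z measure) \<rho> la \<sigma> ra. borel_equivalence G1 G2 Z \<rho> la \<sigma> ra)"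

end

theory Submission
  imports Defs
begin



lemma space_borel_of[simp]: "space (borel_of X) = topspace X"
  unfolding borel_of_def by (rule space_measure_of) (auto dest: openin_subset)

lemma sets_borel_of: "sets (borel_of X) = sigma_sets (topspace X) {U. openin X U}"
  unfolding borel_of_def by (rule sets_measure_of) (auto dest: openin_subset)

lemma borel_of_open: "openin X U \<Longrightarrow> U \<in> sets (borel_of X)"
  unfolding sets_borel_of by auto

lemma borel_of_closed: "closedin X C \<Longrightarrow> C \<in> sets (borel_of X)"
proof -
  assume "closedin X C"
  then have o: "openin X (topspace X - C)" and sub: "C \<subseteq> topspace X" by (auto simp: closedin_def)
  have "topspace X - (topspace X - C) \<in> sigma_sets (topspace X) {U. openin X U}"
    by (rule sigma_sets.Compl) (use o in auto)
  moreover have "topspace X - (topspace X - C) = C" using sub by auto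
  ultimately show ?thesis unfolding sets_borel_of by simp
qed

lemma measurable_borel_of_target:
  assumes "f \<in> space M \<rightarrow> topspace Y"
    and "\<And>U. openin Y U \<Longrightarrow> f -` U \<inter> space M \<in> sets M"
  shows "f \<in> measurable M (borel_of Y)"
  unfolding borel_of_def
  by (rule measurable_measure_of) (use assms in \<open>auto dest: openin_subset\<close>)

lemma continuous_map_measurable_borel:
  assumes "continuous_map X Y f"
  shows "f \<in> measurable (borel_of X) (borel_of Y)"
proof (rule measurable_borel_of_target)
  show "f \<in> space (borel_of X) \<rightarrow> topspace Y" using assms by (auto simp: continuous_map_def)
  fix U assume "openin Y U"
  then have "openin X {x \<in> topspace X. f x \<in> U}" using assms by (simp add: continuous_map)
  then show "f -` U \<inter> space (borel_of X) \<in> sets (borel_of X)"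
  proof -
    have "f -` U \<inter> space (borel_of X) = {x \<in> topspace X. f x \<in> U}" by auto
    then show ?thesis using borel_of_open[OF \<open>openin X {x \<in> topspace X. f x \<in> U}\<close>] by simp
  qed
qed

lemma borel_of_subtopology_sub:
  assumes T: "T \<in> sets (borel_of X)" and A: "A \<in> sets (borel_of (subtopology X T))"
  shows "A \<in> sets (borel_of X)"
proof -
  have "A \<in> sigma_sets (topspace X \<inter> T) {U. openin (subtopology X T) U}"
    using A by (simp add: sets_borel_of)
  then show ?thesis
  proof induction
    case (Basic a)
    then obtain V where "openin X V" "a = V \<inter> T" by (auto simp: openin_subtopology)
    then show ?case using T borel_of_open by blast
  next
    case Empty then show ?case by simp
  next
    case (Compl a)
    have "topspace X \<inter> T \<in> sets (borel_of X)" using T by (metis space_borel_of sets.Int_space_eq1)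
    then show ?case using Compl by blast
  next
    case (Union a)
    then show ?case by blast
  qed
qed

lemma borel_of_subtopology_Int:
  assumes "S \<in> sets (borel_of X)"
  shows "S \<inter> T \<inter> topspace X \<in> sets (borel_of (subtopology X T))"
proof -
  have "id \<in> measurable (borel_of (subtopology X T)) (borel_of X)"
    by (rule continuous_map_measurable_borel) (simp add: continuous_map_from_subtopology)
  from measurable_sets[OF this assms] show ?thesis by (simp add: Int_ac)
qed

lemma open_prod_in_sets:
  assumes "second_countable X" "second_countable Y" "openin (prod_topology X Y) W"
  shows "W \<in> sets (borel_of X \<Otimes>\<^sub>M borel_of Y)"
proof -
  obtain B1 where B1: "countable B1" "\<forall>V\<in>B1. openin X V"
    "\<forall>U x. openin X U \<and> x \<in> U \<longrightarrow> (\<exists>V\<in>B1. x \<in> V \<and> V \<subseteq> U)"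
    using assms(1) unfolding second_countable_def by blast
  obtain B2 where B2: "countable B2" "\<forall>V\<in>B2. openin Y V"
    "\<forall>U x. openin Y U \<and> x \<in> U \<longrightarrow> (\<exists>V\<in>B2. x \<in> V \<and> V \<subseteq> U)"
    using assms(2) unfolding second_countable_def by blast
  define C where "C = (\<lambda>(A,B). A \<times> B) ` {(A,B). A \<in> B1 \<and> B \<in> B2 \<and> A \<times> B \<subseteq> W}"
  have "countable C" unfolding C_def
    by (rule countable_image, rule countable_subset[of _ "B1 \<times> B2"]) (use B1 B2 in \<open>auto intro: countable_SIGMA\<close>)
  moreover have "C \<subseteq> sets (borel_of X \<Otimes>\<^sub>M borel_of Y)"
  proof
    fix S assume "S \<in> C"
    then obtain A B where "A \<in> B1" "B \<in> B2" "S = A \<times> B" unfolding C_def by blast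
    then show "S \<in> sets (borel_of X \<Otimes>\<^sub>M borel_of Y)" using B1 B2
      by (simp add: pair_measureI borel_of_open)
  qed
  moreover have "\<Union>C = W"
  proof
    show "\<Union>C \<subseteq> W" unfolding C_def by auto
    show "W \<subseteq> \<Union>C"
    proof
      fix p assume "p \<in> W"
      then obtain x y where p: "p = (x,y)" "(x,y) \<in> W" by (cases p) auto
      then obtain U V where UV: "openin X U" "openin Y V" "x \<in> U" "y \<in> V" "U \<times> V \<subseteq> W"
        using assms(3)[unfolded openin_prod_topology_alt, rule_format, OF p(2)] by (elim exE conjE) (rule that)
      then obtain A where "A \<in> B1" "x \<in> A" "A \<subseteq> U" using B1 by blast
      moreover obtain B where "B \<in> B2" "y \<in> B" "B \<subseteq> V" using B2 UV by blast
      ultimately have "A \<times> B \<in> C" unfolding C_def using UV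
        by (intro rev_image_eqI[of "(A,B)"]) auto
      moreover have "p \<in> A \<times> B" using p \<open>x \<in> A\<close> \<open>y \<in> B\<close> by simp
      ultimately show "p \<in> \<Union>C" by blast
    qed
  qed
  ultimately show ?thesis using sets.countable_Union[of C "borel_of X \<Otimes>\<^sub>M borel_of Y"] by simp
qed

lemma continuous_restrict_prod_measurable:
  assumes "second_countable X" "second_countable Y"
    and cont: "continuous_map (subtopology (prod_topology X Y) D) Z f"
  shows "f \<in> measurable (restrict_space (borel_of X \<Otimes>\<^sub>M borel_of Y) D) (borel_of Z)"
proof (rule measurable_borel_of_target)
  show "f \<in> space (restrict_space (borel_of X \<Otimes>\<^sub>M borel_of Y) D) \<rightarrow> topspace Z"
    using continuous_map_image_subset_topspace[OF cont] by (auto simp: space_restrict_space space_pair_measure)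
  fix U assume "openin Z U"
  then have "openin (subtopology (prod_topology X Y) D) {p \<in> topspace (subtopology (prod_topology X Y) D). f p \<in> U}"
    using cont by (simp add: continuous_map)
  then obtain W where W: "openin (prod_topology X Y) W"
    "{p \<in> topspace (subtopology (prod_topology X Y) D). f p \<in> U} = W \<inter> D"
    by (auto simp: openin_subtopology)
  have Wsub: "W \<subseteq> topspace X \<times> topspace Y" using openin_subset[OF W(1)] by simp
  have "f -` U \<inter> space (restrict_space (borel_of X \<Otimes>\<^sub>M borel_of Y) D) = D \<inter> W"
    using W(2) Wsub by (auto simp: space_restrict_space space_pair_measure)
  also have "\<dots> \<in> sets (restrict_space (borel_of X \<Otimes>\<^sub>M borel_of Y) D)"
    unfolding sets_restrict_space using open_prod_in_sets[OF assms(1,2) W(1)] by blast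
  finally show "f -` U \<inter> space (restrict_space (borel_of X \<Otimes>\<^sub>M borel_of Y) D) \<in> sets (restrict_space (borel_of X \<Otimes>\<^sub>M borel_of Y) D)" .
qed




fun selS :: "('a \<Rightarrow> 'b) \<Rightarrow> (nat \<Rightarrow> 'a set) \<Rightarrow> 'a set \<Rightarrow> 'b \<Rightarrow> nat \<Rightarrow> nat set" where
  "selS f B K y 0 = {}"
| "selS f B K y (Suc k) = (if y \<in> f ` (K - \<Union>(B ` (selS f B K y k \<union> {k})))
      then selS f B K y k \<union> {k} else selS f B K y k)"

definition selC :: "('a \<Rightarrow> 'b) \<Rightarrow> (nat \<Rightarrow> 'a set) \<Rightarrow> 'a set \<Rightarrow> 'b \<Rightarrow> nat \<Rightarrow> 'a set" where
  "selC f B K y k = {p \<in> K - \<Union>(B ` selS f B K y k). f p = y}"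

definition selp :: "('a \<Rightarrow> 'b) \<Rightarrow> (nat \<Rightarrow> 'a set) \<Rightarrow> 'a set \<Rightarrow> 'b \<Rightarrow> 'a" where
  "selp f B K y = (THE p. \<forall>k. p \<in> selC f B K y k)"

lemma nest_compact:
  fixes E :: "nat \<Rightarrow> 'a set"
  assumes K: "compactin X K" and E: "\<And>k. closedin X (E k)" and dec: "\<And>k m. k \<le> m \<Longrightarrow> E m \<subseteq> E k"
    and U: "openin X U" and sub: "K \<inter> (\<Inter>k. E k) \<subseteq> U"
  shows "\<exists>k. K \<inter> E k \<subseteq> U"
proof -
  define \<U> where "\<U> = insert U (range (\<lambda>k. topspace X - E k))"
  have op: "\<forall>V\<in>\<U>. openin X V" unfolding \<U>_def using U E by auto
  have Ksub: "K \<subseteq> topspace X" using K by (simp add: compactin_subset_topspace)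
  have cov: "K \<subseteq> \<Union>\<U>"
  proof
    fix p assume p: "p \<in> K"
    show "p \<in> \<Union>\<U>"
    proof (cases "\<forall>k. p \<in> E k")
      case True then show ?thesis using p sub unfolding \<U>_def by blast
    next
      case False
      then obtain k where "p \<notin> E k" by blast
      then show ?thesis using p Ksub unfolding \<U>_def by blast
    qed
  qed
  obtain \<F> where F: "finite \<F>" "\<F> \<subseteq> \<U>" "K \<subseteq> \<Union>\<F>"
    using K op cov unfolding compactin_def by meson
  have "\<F> - {U} \<subseteq> (\<lambda>k. topspace X - E k) ` UNIV" using F(2) unfolding \<U>_def by blast
  from finite_subset_image[OF finite_Diff[OF F(1)] this]
  obtain I where "finite I \<and> \<F> - {U} = (\<lambda>k. topspace X - E k) ` I" by blast
  then have I: "finite I" "\<F> - {U} = (\<lambda>k. topspace X - E k) ` I" by auto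
  define N where "N = Max (insert 0 I)"
  have N: "\<And>k. k \<in> I \<Longrightarrow> k \<le> N" unfolding N_def using I(1) by simp
  have "K \<inter> E N \<subseteq> U"
  proof
    fix p assume p: "p \<in> K \<inter> E N"
    then obtain V where V: "V \<in> \<F>" "p \<in> V" using F(3) by blast
    show "p \<in> U"
    proof (cases "V = U")
      case True then show ?thesis using V by simp
    next
      case False
      then have "V \<in> \<F> - {U}" using V by simp
      then obtain k where "k \<in> I" "V = topspace X - E k" using I(2) by blast
      then show ?thesis using V p dec[OF N] by blast
    qed
  qed
  then show ?thesis by blast
qed

locale selector =
  fixes X :: "'a topology" and Yt :: "'b topology" and f :: "'a \<Rightarrow> 'b"
    and B :: "nat \<Rightarrow> 'a set" and K :: "'a set"
  assumes cont: "continuous_map X Yt f" and haus: "Hausdorff_space Yt"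
    and Bopen: "\<And>n. openin X (B n)"
    and sep: "\<And>p q. p \<in> topspace X \<Longrightarrow> q \<in> topspace X \<Longrightarrow> p \<noteq> q \<Longrightarrow> \<exists>n. p \<in> B n \<and> q \<notin> B n"
    and cpt: "compactin X K"
begin

lemma Ksub: "K \<subseteq> topspace X" using cpt by (simp add: compactin_subset_topspace)

lemma selS_Suc_mono: "selS f B K y k \<subseteq> selS f B K y (Suc k)" by auto

lemma selS_mono: "k \<le> m \<Longrightarrow> selS f B K y k \<subseteq> selS f B K y m"
  by (rule lift_Suc_mono_le[of "selS f B K y"]) (use selS_Suc_mono in auto)

lemma selS_less: "selS f B K y k \<subseteq> {..<k}"
  by (induction k) auto

lemma selC_anti: "k \<le> m \<Longrightarrow> selC f B K y m \<subseteq> selC f B K y k"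
  unfolding selC_def using selS_mono by blast

lemma selC_ne: "y \<in> f ` K \<Longrightarrow> selC f B K y k \<noteq> {}"
proof (induction k)
  case 0 then show ?case unfolding selC_def by auto
next
  case (Suc k)
  show ?case
  proof (cases "y \<in> f ` (K - \<Union>(B ` (selS f B K y k \<union> {k})))")
    case True
    then show ?thesis unfolding selC_def by auto
  next
    case False
    then show ?thesis using Suc unfolding selC_def by simp
  qed
qed

lemma fibre_closed: "closedin X {p \<in> topspace X. f p = y}"
proof (cases "y \<in> topspace Yt")
  case True
  have "closedin Yt {y}" using True haus by (simp add: Hausdorff_imp_t1_space closedin_t1_singleton)
  from closedin_continuous_map_preimage[OF cont this] show ?thesis by simp
next
  case False
  then have e: "{p \<in> topspace X. f p = y} = {}" using cont by (auto simp: continuous_map_def)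
  show ?thesis unfolding e by simp
qed

definition E where "E y k = {p \<in> topspace X. f p = y} - \<Union>(B ` selS f B K y k)"

lemma E_closed: "closedin X (E y k)"
  unfolding E_def using fibre_closed Bopen by (intro closedin_diff) auto

lemma selC_E: "selC f B K y k = K \<inter> E y k"
  unfolding selC_def E_def using Ksub by auto

lemma E_anti: "k \<le> m \<Longrightarrow> E y m \<subseteq> E y k"
  unfolding E_def using selS_mono by blast

lemma selC_nest:
  assumes "openin X U" "(\<Inter>k. selC f B K y k) \<subseteq> U"
  shows "\<exists>k. selC f B K y k \<subseteq> U"
proof -
  have "K \<inter> (\<Inter>k. E y k) \<subseteq> U" using assms(2) by (auto simp: selC_E)
  from nest_compact[OF cpt E_closed E_anti assms(1) this] show ?thesis by (simp add: selC_E)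
qed

lemma selC_Inter_ne:
  assumes "y \<in> f ` K" shows "\<exists>p. \<forall>k. p \<in> selC f B K y k"
proof (rule ccontr)
  assume "\<not> ?thesis"
  then have "(\<Inter>k. selC f B K y k) \<subseteq> {}" by blast
  from selC_nest[OF openin_empty this] obtain k where "selC f B K y k \<subseteq> {}" by blast
  with selC_ne[OF assms] show False by blast
qed

lemma selC_unique:
  assumes p: "\<forall>k. p \<in> selC f B K y k" and q: "\<forall>k. q \<in> selC f B K y k"
  shows "p = q"
proof (rule ccontr)
  assume "p \<noteq> q"
  have "p \<in> K" "q \<in> K" using p q unfolding selC_def by auto
  then obtain n where n: "p \<in> B n" "q \<notin> B n" using sep Ksub \<open>p \<noteq> q\<close> by blast
  have "q \<in> selC f B K y n" using q by blast
  then have "q \<in> K - \<Union>(B ` (selS f B K y n \<union> {n}))" "f q = y" using n(2) unfolding selC_def by auto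
  then have "y \<in> f ` (K - \<Union>(B ` (selS f B K y n \<union> {n})))" by blast
  then have "n \<in> selS f B K y (Suc n)" by simp
  moreover have "p \<in> selC f B K y (Suc n)" using p by blast
  ultimately show False using n(1) unfolding selC_def by blast
qed

lemma selp_in:
  assumes "y \<in> f ` K" shows "\<forall>k. selp f B K y \<in> selC f B K y k"
proof -
  obtain p where p: "\<forall>k. p \<in> selC f B K y k" using selC_Inter_ne[OF assms] by blast
  have "\<exists>!p. \<forall>k. p \<in> selC f B K y k" using p selC_unique by blast
  then show ?thesis unfolding selp_def by (rule theI')
qed

lemma selp_prop:
  assumes "y \<in> f ` K" shows "selp f B K y \<in> K" "f (selp f B K y) = y"
  using selp_in[OF assms, rule_format, of 0] unfolding selC_def by auto

lemma selp_open_iff: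
  assumes "y \<in> f ` K" "openin X U"
  shows "selp f B K y \<in> U \<longleftrightarrow> (\<exists>k. selC f B K y k \<subseteq> U)"
proof
  assume "selp f B K y \<in> U"
  moreover have "(\<Inter>k. selC f B K y k) \<subseteq> {selp f B K y}"
  proof
    fix p assume "p \<in> (\<Inter>k. selC f B K y k)"
    then have "\<forall>k. p \<in> selC f B K y k" by blast
    from selC_unique[OF this selp_in[OF assms(1)]] show "p \<in> {selp f B K y}" by simp
  qed
  ultimately have "(\<Inter>k. selC f B K y k) \<subseteq> U" by blast
  then show "\<exists>k. selC f B K y k \<subseteq> U" using selC_nest[OF assms(2)] by blast
next
  assume "\<exists>k. selC f B K y k \<subseteq> U"
  then show "selp f B K y \<in> U" using selp_in[OF assms(1)] by blast
qed

context
  fixes Y0 assumes Y0: "f ` K \<subseteq> Y0" "Y0 \<subseteq> topspace Yt"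
begin

abbreviation "M \<equiv> borel_of (subtopology Yt Y0)"

lemma spaceM: "space M = Y0" using Y0 by auto

lemma Y0M: "Y0 \<in> sets M" by (metis spaceM sets.top)

lemma closed_M: "closedin Yt T \<Longrightarrow> T \<inter> Y0 \<in> sets M"
  by (rule borel_of_closed) (auto simp: closedin_subtopology)

lemma img_M: "compactin X S \<Longrightarrow> f ` S \<inter> Y0 \<in> sets M"
  by (rule closed_M, rule compactin_imp_closedin[OF haus], rule image_compactin[OF _ cont])

lemma cpt_part: "compactin X (K - \<Union>(B ` S) - U)" if "openin X U" for S U
proof -
  have "K - \<Union>(B ` S) - U = (topspace X - (\<Union>(B ` S) \<union> U)) \<inter> K" using Ksub by auto
  moreover have "closedin X (topspace X - (\<Union>(B ` S) \<union> U))"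
    using Bopen that by (intro closedin_diff) auto
  ultimately show ?thesis using closed_Int_compactin[OF _ cpt] by metis
qed

lemma T_M: "f ` (K - \<Union>(B ` S)) \<inter> Y0 \<in> sets M"
  using img_M[OF cpt_part[OF openin_empty, of S]] by simp

lemma selS_meas: "{y \<in> Y0. selS f B K y k = S} \<in> sets M"
proof (induction k arbitrary: S)
  case 0
  have "{y \<in> Y0. selS f B K y 0 = S} = (if S = {} then Y0 else {})" by auto
  then show ?case using Y0M by simp
next
  case (Suc k)
  define T where "T S' = f ` (K - \<Union>(B ` S')) \<inter> Y0" for S'
  have TM: "T S' \<in> sets M" for S' unfolding T_def by (rule T_M)
  have nk: "k \<notin> selS f B K y k" for y using selS_less by blast
  have eq: "{y \<in> Y0. selS f B K y (Suc k) = S} =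
     (if k \<in> S then ({y \<in> Y0. selS f B K y k = S - {k}} \<inter> T S) \<union> ({y \<in> Y0. selS f B K y k = S} - T S)
      else {y \<in> Y0. selS f B K y k = S} - T (S \<union> {k}))"
  proof (cases "k \<in> S")
    case True
    have "selS f B K y (Suc k) = S \<longleftrightarrow> (selS f B K y k = S - {k} \<and> y \<in> T S) \<or> (selS f B K y k = S \<and> y \<notin> T S)"
      if "y \<in> Y0" for y
      using True nk[of y] that unfolding T_def
      by (auto simp: insert_absorb)
    note pw = this
    show ?thesis
    proof (rule set_eqI)
      fix x show "x \<in> {y \<in> Y0. selS f B K y (Suc k) = S} \<longleftrightarrow> x \<in> (if k \<in> S then ({y \<in> Y0. selS f B K y k = S - {k}} \<inter> T S) \<union> ({y \<in> Y0. selS f B K y k = S} - T S)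
      else {y \<in> Y0. selS f B K y k = S} - T (S \<union> {k}))"
        using pw[of x] True by (simp only: if_True mem_Collect_eq Un_iff Int_iff Diff_iff) blast
    qed
  next
    case False
    have "selS f B K y (Suc k) = S \<longleftrightarrow> (selS f B K y k = S \<and> y \<notin> T (S \<union> {k}))"
      if "y \<in> Y0" for y
      using False nk[of y] that unfolding T_def by auto
    note pw = this
    show ?thesis
    proof (rule set_eqI)
      fix x show "x \<in> {y \<in> Y0. selS f B K y (Suc k) = S} \<longleftrightarrow> x \<in> (if k \<in> S then ({y \<in> Y0. selS f B K y k = S - {k}} \<inter> T S) \<union> ({y \<in> Y0. selS f B K y k = S} - T S)
      else {y \<in> Y0. selS f B K y k = S} - T (S \<union> {k}))"
        using pw[of x] False by (simp only: if_False mem_Collect_eq Un_iff Int_iff Diff_iff) blast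
    qed
  qed
  show ?case unfolding eq using Suc TM by auto
qed

lemma selC_sub_meas:
  assumes "openin X U" shows "{y \<in> Y0. selC f B K y k \<subseteq> U} \<in> sets M"
proof -
  have "{y \<in> Y0. selC f B K y k \<subseteq> U} =
     (\<Union>S\<in>Pow {..<k}. {y \<in> Y0. selS f B K y k = S} \<inter> (Y0 - f ` (K - \<Union>(B ` S) - U)))"
    using selS_less unfolding selC_def by blast
  also have "\<dots> \<in> sets M"
  proof (rule sets.finite_UN)
    fix S
    have "Y0 - f ` (K - \<Union>(B ` S) - U) = space M - (f ` (K - \<Union>(B ` S) - U) \<inter> Y0)"
      using spaceM by auto
    also have "\<dots> \<in> sets M" using img_M[OF cpt_part[OF assms]] by blast
    finally show "{y \<in> Y0. selS f B K y k = S} \<inter> (Y0 - f ` (K - \<Union>(B ` S) - U)) \<in> sets M"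
      using selS_meas by blast
  qed simp
  finally show ?thesis .
qed

lemma selp_meas:
  assumes "openin X U" shows "{y \<in> f ` K \<inter> Y0. selp f B K y \<in> U} \<in> sets M"
proof -
  have "{y \<in> f ` K \<inter> Y0. selp f B K y \<in> U} = (f ` K \<inter> Y0) \<inter> (\<Union>k. {y \<in> Y0. selC f B K y k \<subseteq> U})"
    using selp_open_iff[OF _ assms] by auto
  also have "\<dots> \<in> sets M"
    using img_M[OF cpt] selC_sub_meas[OF assms] by blast
  finally show ?thesis .
qed

end
end




definition psi :: "('a \<Rightarrow> 'b) \<Rightarrow> (nat \<Rightarrow> 'a set) \<Rightarrow> (nat \<Rightarrow> 'a set) \<Rightarrow> 'b \<Rightarrow> 'a" where
  "psi f B Kn y = selp f B (Kn (LEAST n. y \<in> f ` Kn n)) y"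

locale selector2 =
  fixes X :: "'a topology" and Yt :: "'b topology" and f :: "'a \<Rightarrow> 'b"
    and B :: "nat \<Rightarrow> 'a set" and Kn :: "nat \<Rightarrow> 'a set"
  assumes cont: "continuous_map X Yt f" and haus: "Hausdorff_space Yt"
    and Bopen: "\<And>n. openin X (B n)"
    and sep: "\<And>p q. p \<in> topspace X \<Longrightarrow> q \<in> topspace X \<Longrightarrow> p \<noteq> q \<Longrightarrow> \<exists>n. p \<in> B n \<and> q \<notin> B n"
    and cptn: "\<And>n. compactin X (Kn n)"
    and cover: "topspace X \<subseteq> (\<Union>n. Kn n)"
begin

lemma sel_n: "selector X Yt f B (Kn n)"
  by unfold_locales (use cont haus Bopen sep cptn in auto)

lemma Kn_sub: "Kn n \<subseteq> topspace X" using cptn by (simp add: compactin_subset_topspace)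

lemma Y0_sub: "f ` topspace X \<subseteq> topspace Yt" using cont by (auto simp: continuous_map_def)

lemma least_in:
  assumes "y \<in> f ` topspace X" shows "y \<in> f ` Kn (LEAST n. y \<in> f ` Kn n)"
proof -
  obtain x where "x \<in> topspace X" "y = f x" using assms by blast
  then obtain n where "y \<in> f ` Kn n" using cover by blast
  then show ?thesis by (rule LeastI)
qed

lemma psi_prop:
  assumes "y \<in> f ` topspace X" shows "psi f B Kn y \<in> topspace X" "f (psi f B Kn y) = y"
proof -
  interpret selector X Yt f B "Kn (LEAST n. y \<in> f ` Kn n)" by (rule sel_n)
  show "psi f B Kn y \<in> topspace X" "f (psi f B Kn y) = y"
    using selp_prop[OF least_in[OF assms]] Ksub unfolding psi_def by auto
qed

lemma psi_meas:
  "psi f B Kn \<in> measurable (borel_of (subtopology Yt (f ` topspace X))) (borel_of X)"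
proof (rule measurable_borel_of_target)
  define Y0 where "Y0 = f ` topspace X"
  have sp: "space (borel_of (subtopology Yt Y0)) = Y0" using Y0_sub unfolding Y0_def by auto
  show "psi f B Kn \<in> space (borel_of (subtopology Yt (f ` topspace X))) \<rightarrow> topspace X"
    using sp psi_prop unfolding Y0_def by auto
  fix U assume U: "openin X U"
  have KY: "f ` Kn n \<subseteq> Y0" for n using Kn_sub unfolding Y0_def by blast
  have imgM: "f ` Kn m \<inter> Y0 \<in> sets (borel_of (subtopology Yt Y0))" for m
  proof -
    interpret selector X Yt f B "Kn m" by (rule sel_n)
    show ?thesis using img_M[OF KY Y0_sub[folded Y0_def] cpt] .
  qed
  have selM: "{y \<in> f ` Kn n \<inter> Y0. selp f B (Kn n) y \<in> U} \<in> sets (borel_of (subtopology Yt Y0))" for n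
  proof -
    interpret selector X Yt f B "Kn n" by (rule sel_n)
    show ?thesis using selp_meas[OF KY Y0_sub[folded Y0_def] U] .
  qed
  have eq: "psi f B Kn -` U \<inter> Y0 =
    (\<Union>n. ((f ` Kn n \<inter> Y0) - (\<Union>m\<in>{..<n}. f ` Kn m \<inter> Y0)) \<inter> {y \<in> f ` Kn n \<inter> Y0. selp f B (Kn n) y \<in> U})"
  proof (rule set_eqI)
    fix y
    show "y \<in> psi f B Kn -` U \<inter> Y0 \<longleftrightarrow> y \<in> (\<Union>n. ((f ` Kn n \<inter> Y0) - (\<Union>m\<in>{..<n}. f ` Kn m \<inter> Y0)) \<inter> {y \<in> f ` Kn n \<inter> Y0. selp f B (Kn n) y \<in> U})"
    proof
      assume y: "y \<in> psi f B Kn -` U \<inter> Y0"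
      define n where "n = (LEAST n. y \<in> f ` Kn n)"
      have "y \<in> f ` Kn n" using least_in y unfolding n_def Y0_def by blast
      moreover have "\<forall>m<n. y \<notin> f ` Kn m" unfolding n_def using not_less_Least by blast
      moreover have "y \<in> Y0" "selp f B (Kn n) y \<in> U" using y unfolding psi_def n_def by auto
      ultimately show "y \<in> (\<Union>n. ((f ` Kn n \<inter> Y0) - (\<Union>m\<in>{..<n}. f ` Kn m \<inter> Y0)) \<inter> {y \<in> f ` Kn n \<inter> Y0. selp f B (Kn n) y \<in> U})"
        by (intro UN_I[of n]) auto
    next
      assume "y \<in> (\<Union>n. ((f ` Kn n \<inter> Y0) - (\<Union>m\<in>{..<n}. f ` Kn m \<inter> Y0)) \<inter> {y \<in> f ` Kn n \<inter> Y0. selp f B (Kn n) y \<in> U})"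
      then obtain n where n: "y \<in> f ` Kn n" "y \<in> Y0" "\<forall>m<n. y \<notin> f ` Kn m" "selp f B (Kn n) y \<in> U" by blast
      have "(LEAST n. y \<in> f ` Kn n) = n"
        by (rule Least_equality) (use n in \<open>auto simp: not_less[symmetric]\<close>)
      then show "y \<in> psi f B Kn -` U \<inter> Y0" using n unfolding psi_def by simp
    qed
  qed
  have "psi f B Kn -` U \<inter> space (borel_of (subtopology Yt (f ` topspace X))) = psi f B Kn -` U \<inter> Y0"
    using sp unfolding Y0_def by simp
  also have "\<dots> \<in> sets (borel_of (subtopology Yt Y0))"
  proof -
    have A: "(\<Union>m\<in>{..<n}. f ` Kn m \<inter> Y0) \<in> sets (borel_of (subtopology Yt Y0))" for n
      by (rule sets.finite_UN) (use imgM in auto)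
    have "((f ` Kn n \<inter> Y0) - (\<Union>m\<in>{..<n}. f ` Kn m \<inter> Y0)) \<inter> {y \<in> f ` Kn n \<inter> Y0. selp f B (Kn n) y \<in> U}
       \<in> sets (borel_of (subtopology Yt Y0))" for n
      by (rule sets.Int[OF sets.Diff[OF imgM A] selM])
    then show ?thesis unfolding eq by blast
  qed
  finally show "psi f B Kn -` U \<inter> space (borel_of (subtopology Yt (f ` topspace X))) \<in> sets (borel_of (subtopology Yt (f ` topspace X)))"
    unfolding Y0_def .
qed

end




locale gpd =
  fixes G :: "('g,'u,'x) tgroupoid_scheme"
  assumes gpd: "groupoid G"
begin

abbreviation "arr \<equiv> g_arr G"
abbreviation "obj \<equiv> g_obj G"
abbreviation "rr \<equiv> g_r G"
abbreviation "ss \<equiv> g_s G"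
abbreviation "mm \<equiv> g_mul G"
abbreviation "iv \<equiv> g_inv G"
abbreviation "ii \<equiv> g_id G"

lemma r_obj: "x \<in> arr \<Longrightarrow> rr x \<in> obj" and s_obj: "x \<in> arr \<Longrightarrow> ss x \<in> obj"
  using gpd unfolding groupoid_def by auto

lemma id_arr: "u \<in> obj \<Longrightarrow> ii u \<in> arr" and r_id: "u \<in> obj \<Longrightarrow> rr (ii u) = u"
  and s_id: "u \<in> obj \<Longrightarrow> ss (ii u) = u"
  using gpd unfolding groupoid_def by auto

lemma mul_arr: "x \<in> arr \<Longrightarrow> y \<in> arr \<Longrightarrow> ss x = rr y \<Longrightarrow> mm x y \<in> arr"
  and r_mul: "x \<in> arr \<Longrightarrow> y \<in> arr \<Longrightarrow> ss x = rr y \<Longrightarrow> rr (mm x y) = rr x"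
  and s_mul: "x \<in> arr \<Longrightarrow> y \<in> arr \<Longrightarrow> ss x = rr y \<Longrightarrow> ss (mm x y) = ss y"
  using gpd unfolding groupoid_def by auto

lemma assoc: "x \<in> arr \<Longrightarrow> y \<in> arr \<Longrightarrow> z \<in> arr \<Longrightarrow> ss x = rr y \<Longrightarrow> ss y = rr z \<Longrightarrow>
    mm (mm x y) z = mm x (mm y z)"
  using gpd unfolding groupoid_def by blast

lemma id_left: "x \<in> arr \<Longrightarrow> mm (ii (rr x)) x = x" and id_right: "x \<in> arr \<Longrightarrow> mm x (ii (ss x)) = x"
  using gpd unfolding groupoid_def by auto

lemma inv_arr: "x \<in> arr \<Longrightarrow> iv x \<in> arr" and r_inv: "x \<in> arr \<Longrightarrow> rr (iv x) = ss x"
  and s_inv: "x \<in> arr \<Longrightarrow> ss (iv x) = rr x"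
  and inv_left: "x \<in> arr \<Longrightarrow> mm (iv x) x = ii (ss x)"
  and inv_right: "x \<in> arr \<Longrightarrow> mm x (iv x) = ii (rr x)"
  using gpd unfolding groupoid_def by auto

lemma cancel_left:
  assumes x: "x \<in> arr" and y: "y \<in> arr" and z: "z \<in> arr" and xy: "ss x = rr y" and xz: "ss x = rr z"
    and e: "mm x y = mm x z"
  shows "y = z"
proof -
  have il: "mm (iv x) x = ii (ss x)" using x by (rule inv_left)
  have si: "ss (iv x) = rr x" using x by (rule s_inv)
  have "y = mm (ii (rr y)) y" using id_left[OF y] by simp
  also have "\<dots> = mm (mm (iv x) x) y" using il xy by simp
  also have "\<dots> = mm (iv x) (mm x y)" using assoc[OF inv_arr[OF x] x y si xy] .
  also have "\<dots> = mm (iv x) (mm x z)" using e by simp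
  also have "\<dots> = mm (mm (iv x) x) z" using assoc[OF inv_arr[OF x] x z si xz] by simp
  also have "\<dots> = mm (ii (rr z)) z" using il xz by simp
  also have "\<dots> = z" using id_left[OF z] .
  finally show ?thesis .
qed

lemma cancel_right:
  assumes x: "x \<in> arr" and y: "y \<in> arr" and z: "z \<in> arr" and yx: "ss y = rr x" and zx: "ss z = rr x"
    and e: "mm y x = mm z x"
  shows "y = z"
proof -
  have ir: "mm x (iv x) = ii (rr x)" using x by (rule inv_right)
  have ri: "rr (iv x) = ss x" using x by (rule r_inv)
  have "y = mm y (ii (ss y))" using id_right[OF y] by simp
  also have "\<dots> = mm y (mm x (iv x))" using ir yx by simp
  also have "\<dots> = mm (mm y x) (iv x)" using assoc[OF y x inv_arr[OF x] yx ri[symmetric]] by simp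
  also have "\<dots> = mm (mm z x) (iv x)" using e by simp
  also have "\<dots> = mm z (mm x (iv x))" using assoc[OF z x inv_arr[OF x] zx ri[symmetric]] .
  also have "\<dots> = mm z (ii (ss z))" using ir zx by simp
  also have "\<dots> = z" using id_right[OF z] .
  finally show ?thesis .
qed

lemma inv_mul:
  assumes x: "x \<in> arr" and y: "y \<in> arr" and xy: "ss x = rr y"
  shows "iv (mm x y) = mm (iv y) (iv x)"
proof -
  have xya: "mm x y \<in> arr" using mul_arr[OF x y xy] .
  have ix: "iv x \<in> arr" and iy: "iv y \<in> arr" using x y by (auto simp: inv_arr)
  have c1: "ss (iv y) = rr (iv x)" using x y xy by (simp add: s_inv r_inv)
  have yixa: "mm (iv y) (iv x) \<in> arr" using mul_arr[OF iy ix c1] .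
  show ?thesis
  proof (rule cancel_left[OF xya inv_arr[OF xya] yixa])
    show "ss (mm x y) = rr (iv (mm x y))" using xya by (simp add: r_inv)
    show "ss (mm x y) = rr (mm (iv y) (iv x))" using s_mul[OF x y xy] r_mul[OF iy ix c1] r_inv[OF y] by simp
    have "mm (mm x y) (mm (iv y) (iv x)) = mm x (mm y (mm (iv y) (iv x)))"
      using assoc[OF x y yixa xy] r_mul[OF iy ix c1] r_inv[OF y] by simp
    also have "mm y (mm (iv y) (iv x)) = mm (mm y (iv y)) (iv x)"
      using assoc[OF y iy ix _ c1] r_inv[OF y] by simp
    also have "\<dots> = mm (ii (rr y)) (iv x)" using inv_right[OF y] by simp
    also have "\<dots> = iv x" using id_left[OF ix] r_inv[OF x] xy by simp
    also have "mm x (iv x) = ii (rr x)" using inv_right[OF x] .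
    also have "\<dots> = ii (rr (mm x y))" using r_mul[OF x y xy] by simp
    also have "\<dots> = mm (mm x y) (iv (mm x y))" using inv_right[OF xya] by simp
    finally show "mm (mm x y) (iv (mm x y)) = mm (mm x y) (mm (iv y) (iv x))" by simp
  qed
qed

lemma inv_id: assumes u: "u \<in> obj" shows "iv (ii u) = ii u"
proof -
  have a: "ii u \<in> arr" using id_arr[OF u] .
  show ?thesis
  proof (rule cancel_left[OF a inv_arr[OF a] a])
    show "ss (ii u) = rr (iv (ii u))" using r_inv[OF a] by simp
    show "ss (ii u) = rr (ii u)" using r_id[OF u] s_id[OF u] by simp
    have "mm (ii u) (ii u) = ii u" using id_left[OF a] r_id[OF u] by simp
    moreover have "mm (ii u) (iv (ii u)) = ii u" using inv_right[OF a] r_id[OF u] by simp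
    ultimately show "mm (ii u) (iv (ii u)) = mm (ii u) (ii u)" by simp
  qed
qed

lemma inv_inv: assumes x: "x \<in> arr" shows "iv (iv x) = x"
proof -
  have ix: "iv x \<in> arr" using inv_arr[OF x] .
  show ?thesis
  proof (rule cancel_left[OF ix inv_arr[OF ix] x])
    show "ss (iv x) = rr (iv (iv x))" using r_inv[OF ix] by simp
    show "ss (iv x) = rr x" using s_inv[OF x] .
    show "mm (iv x) (iv (iv x)) = mm (iv x) x"
      using inv_right[OF ix] inv_left[OF x] r_inv[OF x] by simp
  qed
qed

lemma mul_eq_self_left:
  assumes x: "x \<in> arr" and y: "y \<in> arr" and xy: "ss x = rr y" and e: "mm x y = y" shows "x = ii (rr y)"
proof (rule cancel_right[OF y x id_arr[OF r_obj[OF y]] xy])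
  show "ss (ii (rr y)) = rr y" using s_id[OF r_obj[OF y]] .
  show "mm x y = mm (ii (rr y)) y" using e id_left[OF y] by simp
qed

lemma mul_eq_self_right:
  assumes x: "x \<in> arr" and y: "y \<in> arr" and yx: "ss y = rr x" and e: "mm y x = y" shows "x = ii (ss y)"
proof (rule cancel_left[OF y x id_arr[OF s_obj[OF y]] yx])
  show "ss y = rr (ii (ss y))" using r_id[OF s_obj[OF y]] by simp
  show "mm y x = mm y (ii (ss y))" using e id_right[OF y] by simp
qed

lemma hom_id:
  fixes c :: "'g \<Rightarrow> 'q::group_add"
  assumes "groupoid_hom_to G c" "u \<in> obj" shows "c (ii u) = 0"
proof -
  have "c (mm (ii u) (ii u)) = c (ii u) + c (ii u)"
    using assms unfolding groupoid_hom_to_def by (simp add: id_arr r_id s_id)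
  moreover have "mm (ii u) (ii u) = ii u" using id_left[OF id_arr[OF assms(2)]] assms(2) by (simp add: r_id)
  ultimately have e: "c (ii u) = c (ii u) + c (ii u)" by simp
  then show ?thesis by (metis add_left_cancel add.right_neutral)
qed

lemma hom_inv:
  fixes c :: "'g \<Rightarrow> 'q::group_add"
  assumes "groupoid_hom_to G c" "x \<in> arr" shows "c (iv x) = - c x"
proof -
  have "c (mm x (iv x)) = c x + c (iv x)"
    using assms unfolding groupoid_hom_to_def by (simp add: inv_arr r_inv)
  moreover have "c (mm x (iv x)) = 0" using assms by (simp add: inv_right hom_id r_obj)
  ultimately have "c x + c (iv x) = 0" by simp
  from add.inverse_unique[OF this] show ?thesis by simp
qed

lemma hom_mul:
  fixes c :: "'g \<Rightarrow> 'q::group_add"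
  assumes "groupoid_hom_to G c" "x \<in> arr" "y \<in> arr" "ss x = rr y" shows "c (mm x y) = c x + c y"
  using assms unfolding groupoid_hom_to_def by blast

end




lemma Hausdorff_euclidean_t2: "Hausdorff_space (euclidean :: 'a::t2_space topology)"
  unfolding Hausdorff_space_def disjnt_def using hausdorff by fastforce

lemma fibre_closedin:
  assumes "continuous_map X Y f" "Hausdorff_space Y"
  shows "closedin X {p \<in> topspace X. f p = y}"
proof (cases "y \<in> topspace Y")
  case True
  have "closedin Y {y}" using True assms(2) by (simp add: Hausdorff_imp_t1_space closedin_t1_singleton)
  from closedin_continuous_map_preimage[OF assms(1) this] show ?thesis by simp
next
  case False
  then have e: "{p \<in> topspace X. f p = y} = {}" using assms(1) by (auto simp: continuous_map_def)
  show ?thesis unfolding e by simp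
qed

lemma borel_of_translate_set:
  assumes F: "closedin X F" and h: "continuous_map (subtopology X F) X' h" and A: "A \<in> sets (borel_of X')"
  shows "{y \<in> F. h y \<in> A} \<in> sets (borel_of X)"
proof -
  have Fsub: "F \<subseteq> topspace X" using F by (simp add: closedin_subset)
  have "h -` A \<inter> space (borel_of (subtopology X F)) \<in> sets (borel_of (subtopology X F))"
    using measurable_sets[OF continuous_map_measurable_borel[OF h] A] .
  moreover have "h -` A \<inter> space (borel_of (subtopology X F)) = {y \<in> F. h y \<in> A}" using Fsub by auto
  ultimately have "{y \<in> F. h y \<in> A} \<in> sets (borel_of (subtopology X F))" by simp
  from borel_of_subtopology_sub[OF borel_of_closed[OF F] this] show ?thesis .
qed

locale setting = gpd G for G :: "('g,'u) tgroupoid" +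
  fixes c :: "'g \<Rightarrow> 'q::{topological_group_add, t2_space}"
  assumes lc: "lc_groupoid G" and sc: "second_countable (g_top G)"
    and lh: "locally_Hausdorff (g_top G)"
    and cc: "continuous_map (g_top G) euclidean c"
    and hom: "groupoid_hom_to G c"
begin

abbreviation "TG \<equiv> g_top G"
abbreviation "TO \<equiv> g_otop G"
abbreviation "PT \<equiv> prod_topology TO (euclidean :: 'q topology)"
abbreviation "ts \<equiv> tilde_s G c"
abbreviation "YY \<equiv> ts ` arr"

lemma tgpd: "topological_groupoid G" using lc unfolding lc_groupoid_def by simp

lemma topG: "topspace TG = arr" and topO: "topspace TO = obj"
  using tgpd unfolding topological_groupoid_def by auto

lemma cont_r: "continuous_map TG TO rr" and cont_s: "continuous_map TG TO ss"
  and cont_inv: "continuous_map TG TG iv"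
  and cont_mul: "continuous_map (subtopology (prod_topology TG TG) (composable G)) TG (\<lambda>(x,y). mm x y)"
  and homeo_id: "homeomorphic_map TO (subtopology TG (ii ` obj)) ii"
  using tgpd unfolding topological_groupoid_def by auto

lemma cont_id: "continuous_map TO TG ii"
  using homeomorphic_imp_continuous_map[OF homeo_id] continuous_map_into_fulltopology by blast

lemma hausO: "Hausdorff_space TO" using lc unfolding lc_groupoid_def by simp

lemma hausP: "Hausdorff_space PT"
  unfolding Hausdorff_space_prod_topology using hausO Hausdorff_euclidean_t2 by blast

lemma cont_ts: "continuous_map TG PT ts"
  unfolding tilde_s_def using cont_s cc by (intro continuous_map_pairedI) auto

lemma topP: "topspace PT = obj \<times> UNIV" using topO by simp

lemma YY_sub: "YY \<subseteq> obj \<times> UNIV" unfolding tilde_s_def using s_obj by auto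

lemma ts_eq: "ts x = (ss x, c x)" by (simp add: tilde_s_def)

lemma sep_open:
  assumes "p \<in> arr" "q \<in> arr" "p \<noteq> q"
  shows "\<exists>V. openin TG V \<and> p \<in> V \<and> q \<notin> V"
proof -
  obtain U where U: "openin TG U" "p \<in> U" "Hausdorff_space (subtopology TG U)"
    using lh assms(1) topG unfolding locally_Hausdorff_def by auto
  show ?thesis
  proof (cases "q \<in> U")
    case False then show ?thesis using U by blast
  next
    case True
    have "p \<in> topspace (subtopology TG U)" "q \<in> topspace (subtopology TG U)"
      using U(2) True assms topG by auto
    then obtain V W where VW: "openin (subtopology TG U) V" "openin (subtopology TG U) W" "p \<in> V" "q \<in> W" "disjnt V W"
      using U(3) assms(3) unfolding Hausdorff_space_def by blast
    then have "openin TG V" using U(1) openin_trans_full by blast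
    then show ?thesis using VW by (auto simp: disjnt_def)
  qed
qed

lemma base_exists:
  "\<exists>B::nat \<Rightarrow> 'g set. (\<forall>n. openin TG (B n)) \<and> (\<forall>U x. openin TG U \<and> x \<in> U \<longrightarrow> (\<exists>n. x \<in> B n \<and> B n \<subseteq> U))"
proof -
  obtain \<B> where B: "countable \<B>" "\<forall>V\<in>\<B>. openin TG V"
    "\<forall>U x. openin TG U \<and> x \<in> U \<longrightarrow> (\<exists>V\<in>\<B>. x \<in> V \<and> V \<subseteq> U)"
    using sc unfolding second_countable_def by blast
  define B' where "B' = insert {} \<B>"
  have r: "range (from_nat_into B') = B'" unfolding B'_def using B(1) by simp
  show ?thesis
  proof (intro exI[of _ "from_nat_into B'"] conjI allI impI)
    fix n show "openin TG (from_nat_into B' n)"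
      using from_nat_into[of B' n] B(2) unfolding B'_def by auto
  next
    fix U x assume "openin TG U \<and> x \<in> U"
    then obtain V where "V \<in> \<B>" "x \<in> V" "V \<subseteq> U" using B(3) by blast
    moreover have "V \<in> B'" unfolding B'_def using \<open>V \<in> \<B>\<close> by simp
    then have "V \<in> range (from_nat_into B')" using r by simp
    ultimately show "\<exists>n. x \<in> from_nat_into B' n \<and> from_nat_into B' n \<subseteq> U" by (metis rangeE)
  qed
qed

lemma section_exists:
  "\<exists>\<psi>. (\<forall>y\<in>YY. \<psi> y \<in> arr \<and> ts (\<psi> y) = y) \<and>
       \<psi> \<in> measurable (borel_of (subtopology PT YY)) (borel_of TG)"
proof -
  obtain B :: "nat \<Rightarrow> 'g set" where BB: "(\<forall>n. openin TG (B n)) \<and> (\<forall>U x. openin TG U \<and> x \<in> U \<longrightarrow> (\<exists>n. x \<in> B n \<and> B n \<subseteq> U))"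
    using base_exists by (elim exE) (rule that)
  have B: "\<And>n. openin TG (B n)"
    "\<And>U x. openin TG U \<Longrightarrow> x \<in> U \<Longrightarrow> \<exists>n. x \<in> B n \<and> B n \<subseteq> U"
    using BB by auto
  define Kn where "Kn n = (if \<exists>K. compactin TG K \<and> B n \<subseteq> K then SOME K. compactin TG K \<and> B n \<subseteq> K else {})" for n
  have Kn: "compactin TG (Kn n)" for n
  proof (cases "\<exists>K. compactin TG K \<and> B n \<subseteq> K")
    case True then show ?thesis unfolding Kn_def if_P[OF True] using someI_ex[OF True] by blast
  next
    case False then show ?thesis unfolding Kn_def if_not_P[OF False] by simp
  qed
  have cover: "topspace TG \<subseteq> (\<Union>n. Kn n)"
  proof
    fix x assume x: "x \<in> topspace TG"
    then obtain V K where VK: "openin TG V" "compactin TG K" "x \<in> V" "V \<subseteq> K"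
      using lc unfolding lc_groupoid_def locally_compact_nH_def by (meson openin_topspace)
    obtain n where n: "x \<in> B n" "B n \<subseteq> V" using B(2)[OF VK(1,3)] by blast
    have ex: "\<exists>K. compactin TG K \<and> B n \<subseteq> K" using VK n by blast
    then have "B n \<subseteq> Kn n" unfolding Kn_def if_P[OF ex] using someI_ex[OF ex] by blast
    then show "x \<in> (\<Union>n. Kn n)" using n by blast
  qed
  have sep: "\<exists>n. p \<in> B n \<and> q \<notin> B n" if pq: "p \<in> topspace TG" "q \<in> topspace TG" "p \<noteq> q" for p q
  proof -
    obtain V where "openin TG V" "p \<in> V" "q \<notin> V" using sep_open[of p q] pq topG by auto
    then show ?thesis using B(2) by blast
  qed
  interpret selector2 TG PT ts B Kn
    by unfold_locales (use cont_ts hausP B(1) sep Kn cover in auto)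
  show ?thesis
    using psi_prop psi_meas topG by (intro exI[of _ "psi ts B Kn"]) auto
qed

end




definition dg :: "'a \<Rightarrow> 'a \<times> 'a" where "dg x = (x, x)"

lemma inj_dg: "inj dg" unfolding dg_def by (auto intro: injI)

lemma meas_into_subtopology:
  assumes "f \<in> measurable M (borel_of X)" "f \<in> space M \<rightarrow> T"
  shows "f \<in> measurable M (borel_of (subtopology X T))"
proof (rule measurable_borel_of_target)
  show "f \<in> space M \<rightarrow> topspace (subtopology X T)"
    using measurable_space[OF assms(1)] assms(2) by auto
  fix U assume "openin (subtopology X T) U"
  then obtain V where V: "openin X V" "U = V \<inter> T" by (auto simp: openin_subtopology)
  have "f -` U \<inter> space M = f -` V \<inter> space M" using V assms(2) by auto
  then show "f -` U \<inter> space M \<in> sets M" using measurable_sets[OF assms(1) borel_of_open[OF V(1)]] by simp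
qed

context setting
begin

abbreviation "QT \<equiv> prod_topology (euclidean :: 'q topology) (prod_topology TG (euclidean :: 'q topology))"

definition "G1 = restrict_groupoid (skew G c) YY"
definition "H = kernel_groupoid G c"
definition "ZZ = embed_measure (borel_of TG) dg"

lemma G1_arr: "g_arr G1 = {(a,x,b). x \<in> arr \<and> b = a + c x \<and> (rr x, a) \<in> YY \<and> (ss x, b) \<in> YY}"
  unfolding G1_def restrict_groupoid_def skew_def Let_def by auto

lemma G1_mem: "(a,x,b) \<in> g_arr G1 \<longleftrightarrow> x \<in> arr \<and> b = a + c x \<and> (rr x, a) \<in> YY \<and> (ss x, b) \<in> YY"
  unfolding G1_arr by simp

lemma G1_r[simp]: "g_r G1 (a,x,b) = (rr x, a)" and G1_s[simp]: "g_s G1 (a,x,b) = (ss x, b)"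
  and G1_mul[simp]: "g_mul G1 (a,x,b) (b',y,d) = (a, mm x y, d)"
  and G1_id[simp]: "g_id G1 (u,q) = (q, ii u, q)"
  and G1_otop: "g_otop G1 = subtopology PT YY"
  unfolding G1_def restrict_groupoid_def skew_def Let_def by auto

lemma G1_top: "g_top G1 = subtopology QT (g_arr G1)"
  unfolding G1_def restrict_groupoid_def skew_def Let_def
  by (simp add: subtopology_subtopology, intro arg_cong[where f="subtopology _"]) auto

lemma G1_topspace: "topspace (g_top G1) = g_arr G1"
  unfolding G1_top using topG by (auto simp: G1_arr)

lemma H_arr: "g_arr H = {x \<in> arr. c x = 0}"
  and H_r[simp]: "g_r H = rr" and H_s[simp]: "g_s H = ss" and H_mul[simp]: "g_mul H = mm"
  and H_inv[simp]: "g_inv H = iv" and H_id[simp]: "g_id H = ii"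
  and H_top: "g_top H = subtopology TG (g_arr H)" and H_otop: "g_otop H = TO"
  unfolding H_def kernel_groupoid_def Let_def by auto

lemma H_topspace: "topspace (g_top H) = g_arr H"
  unfolding H_top using topG by (auto simp: H_arr)

lemma YY_mem: "(u,q) \<in> YY \<longleftrightarrow> (\<exists>x\<in>arr. ss x = u \<and> c x = q)"
  by (auto simp: tilde_s_def)

lemma ts_in: "x \<in> arr \<Longrightarrow> ts x \<in> YY" by simp

lemma spaceZ: "space ZZ = dg ` arr"
  unfolding ZZ_def by (simp add: space_embed_measure topG)

lemma setsZ: "sets ZZ = {dg ` A | A. A \<in> sets (borel_of TG)}"
  unfolding ZZ_def using inj_dg by (rule sets_embed_measure)

lemma meas_from_Z:
  assumes "(\<lambda>x. g (dg x)) \<in> measurable (borel_of TG) N" shows "g \<in> measurable ZZ N"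
  unfolding ZZ_def by (rule measurable_embed_measure1[of g dg, OF assms])

lemma meas_to_Z:
  assumes "h \<in> measurable M (borel_of TG)" shows "(\<lambda>x. dg (h x)) \<in> measurable M ZZ"
  unfolding ZZ_def by (rule measurable_compose[OF assms measurable_embed_measure2[OF inj_dg]])

lemma meas_fst_Z: "fst \<in> measurable ZZ (borel_of TG)"
  by (rule meas_from_Z) (simp add: dg_def measurable_id)

lemma meas_cont: "continuous_map TG X f \<Longrightarrow> f \<in> measurable (borel_of TG) (borel_of X)"
  by (rule continuous_map_measurable_borel)

lemma meas_inv: "iv \<in> measurable (borel_of TG) (borel_of TG)"
  by (rule continuous_map_measurable_borel[OF cont_inv])

lemma meas_mul: "(\<lambda>(x,y). mm x y) \<in> measurable (restrict_space (borel_of TG \<Otimes>\<^sub>M borel_of TG) (composable G)) (borel_of TG)"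
  by (rule continuous_restrict_prod_measurable[OF sc sc cont_mul])

lemma meas_mul_comp:
  assumes f: "f \<in> measurable M (borel_of TG)" and g: "g \<in> measurable M (borel_of TG)"
    and comp: "\<And>x. x \<in> space M \<Longrightarrow> ss (f x) = rr (g x)"
  shows "(\<lambda>x. mm (f x) (g x)) \<in> measurable M (borel_of TG)"
proof -
  have "(\<lambda>x. (f x, g x)) \<in> measurable M (restrict_space (borel_of TG \<Otimes>\<^sub>M borel_of TG) (composable G))"
  proof (rule measurable_restrict_space2)
    show "(\<lambda>x. (f x, g x)) \<in> space M \<rightarrow> composable G"
      using measurable_space[OF f] measurable_space[OF g] comp topG by (auto simp: composable_def)
    show "(\<lambda>x. (f x, g x)) \<in> measurable M (borel_of TG \<Otimes>\<^sub>M borel_of TG)"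
      by (rule measurable_Pair[OF f g])
  qed
  from measurable_compose[OF this meas_mul] show ?thesis by simp
qed

lemma cont_proj_G1: "continuous_map (g_top G1) TG (\<lambda>x. fst (snd x))"
proof -
  have "continuous_map QT TG (fst \<circ> snd)"
    by (rule continuous_map_compose[OF continuous_map_snd continuous_map_fst])
  then show ?thesis unfolding G1_top by (intro continuous_map_from_subtopology) (simp add: o_def)
qed

lemma cont_r_G1: "continuous_map (g_top G1) PT (g_r G1)"
proof -
  have "continuous_map (g_top G1) PT (\<lambda>x. (rr (fst (snd x)), fst x))"
  proof (intro continuous_map_pairedI)
    show "continuous_map (g_top G1) TO (\<lambda>x. rr (fst (snd x)))"
      using continuous_map_compose[OF cont_proj_G1 cont_r] by (simp add: o_def)
    show "continuous_map (g_top G1) euclidean fst"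
      unfolding G1_top by (intro continuous_map_from_subtopology continuous_map_fst)
  qed
  then show ?thesis by (rule continuous_map_eq) auto
qed

lemma range_fibre_G1_closed: "closedin (g_top G1) (range_fibre G1 u)"
proof -
  have "range_fibre G1 u = {p \<in> topspace (g_top G1). g_r G1 p = u}"
    unfolding range_fibre_def G1_topspace by simp
  then show ?thesis using fibre_closedin[OF cont_r_G1 hausP] by simp
qed

lemma source_fibre_H_closed: "closedin (g_top H) (source_fibre H u)"
proof -
  have "source_fibre H u = {p \<in> topspace (g_top H). ss p = u}"
    unfolding source_fibre_def H_topspace by simp
  moreover have "continuous_map (g_top H) TO ss"
    unfolding H_top by (rule continuous_map_from_subtopology[OF cont_s])
  ultimately show ?thesis using fibre_closedin[OF _ hausO] by simp
qed

lemma cont_incl_H: "continuous_map (g_top H) TG (\<lambda>x. x)"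
  unfolding H_top by (rule continuous_map_from_subtopology) simp

end




context setting
begin

definition "rho z = ts (fst z)"
definition "laA x z = dg (mm (fst z) (iv (fst (snd x))))"
definition "sig z = rr (fst z)"
definition "raA z h = dg (mm (iv h) (fst z))"

lemma spaceZ_E:
  assumes "z \<in> space ZZ" obtains \<eta> where "\<eta> \<in> arr" "z = dg \<eta>"
  using assms unfolding spaceZ by blast

lemma dg_in_Z: "\<eta> \<in> arr \<Longrightarrow> dg \<eta> \<in> space ZZ" unfolding spaceZ by blast

lemma rho_dg[simp]: "rho (dg \<eta>) = ts \<eta>" and sig_dg[simp]: "sig (dg \<eta>) = rr \<eta>"
  unfolding rho_def sig_def dg_def by auto

lemma laA_dg[simp]: "laA (a,\<gamma>,b) (dg \<eta>) = dg (mm \<eta> (iv \<gamma>))"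
  and raA_dg[simp]: "raA (dg \<eta>) h = dg (mm (iv h) \<eta>)"
  unfolding laA_def raA_def dg_def by auto

lemma fst_dg[simp]: "fst (dg x) = x" and snd_dg[simp]: "snd (dg x) = x" unfolding dg_def by auto

lemma dg_eq[simp]: "dg x = dg y \<longleftrightarrow> x = y" unfolding dg_def by auto

lemma c_mul: "x \<in> arr \<Longrightarrow> y \<in> arr \<Longrightarrow> ss x = rr y \<Longrightarrow> c (mm x y) = c x + c y"
  by (rule hom_mul[OF hom])

lemma c_inv: "x \<in> arr \<Longrightarrow> c (iv x) = - c x" by (rule hom_inv[OF hom])

lemma c_id: "u \<in> obj \<Longrightarrow> c (ii u) = 0" by (rule hom_id[OF hom])

lemma ts_mul_inv:
  assumes "\<eta> \<in> arr" "\<gamma> \<in> arr" "ss \<eta> = ss \<gamma>"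
  shows "mm \<eta> (iv \<gamma>) \<in> arr" "ts (mm \<eta> (iv \<gamma>)) = (rr \<gamma>, c \<eta> + - c \<gamma>)"
    "rr (mm \<eta> (iv \<gamma>)) = rr \<eta>"
proof -
  have cp: "ss \<eta> = rr (iv \<gamma>)" using assms by (simp add: r_inv)
  show "mm \<eta> (iv \<gamma>) \<in> arr" using mul_arr[OF assms(1) inv_arr[OF assms(2)] cp] .
  show "ts (mm \<eta> (iv \<gamma>)) = (rr \<gamma>, c \<eta> + - c \<gamma>)"
    unfolding ts_eq using s_mul[OF assms(1) inv_arr[OF assms(2)] cp] s_inv[OF assms(2)]
      c_mul[OF assms(1) inv_arr[OF assms(2)] cp] c_inv[OF assms(2)] by simp
  show "rr (mm \<eta> (iv \<gamma>)) = rr \<eta>" using r_mul[OF assms(1) inv_arr[OF assms(2)] cp] .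
qed

lemma G1_E:
  assumes "x \<in> g_arr G1"
  obtains a \<gamma> b where "x = (a,\<gamma>,b)" "\<gamma> \<in> arr" "b = a + c \<gamma>" "(rr \<gamma>, a) \<in> YY" "(ss \<gamma>, b) \<in> YY"
  using assms unfolding G1_arr by auto

lemma rho_meas: "rho \<in> measurable ZZ (borel_of (g_otop G1))"
proof (rule meas_from_Z)
  have "continuous_map TG (subtopology PT YY) ts"
    by (rule continuous_map_into_subtopology[OF cont_ts]) (auto simp: topG)
  then show "(\<lambda>x. rho (dg x)) \<in> measurable (borel_of TG) (borel_of (g_otop G1))"
    unfolding G1_otop by (simp add: continuous_map_measurable_borel)
qed

lemma sig_meas: "sig \<in> measurable ZZ (borel_of TO)"
  by (rule meas_from_Z) (simp add: continuous_map_measurable_borel[OF cont_r])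

lemma left_action: "left_borel_action G1 ZZ rho laA"
  unfolding left_borel_action_def
proof (intro conjI ballI impI)
  show "rho \<in> measurable ZZ (borel_of (g_otop G1))" by (rule rho_meas)
next
  fix z x assume z: "z \<in> space ZZ" and x: "x \<in> g_arr G1" and sx: "g_s G1 x = rho z"
  obtain \<eta> where \<eta>: "\<eta> \<in> arr" "z = dg \<eta>" using z by (rule spaceZ_E)
  obtain a \<gamma> b where xx: "x = (a,\<gamma>,b)" "\<gamma> \<in> arr" "b = a + c \<gamma>" using x by (rule G1_E)
  have e: "ss \<gamma> = ss \<eta>" "b = c \<eta>" using sx \<eta> xx by (auto simp: ts_eq)
  show "laA x z \<in> space ZZ" using \<eta> xx e ts_mul_inv(1)[of \<eta> \<gamma>] dg_in_Z by simp
  show "rho (laA x z) = g_r G1 x" using \<eta> xx e ts_mul_inv(2)[of \<eta> \<gamma>] by simp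
next
  fix z assume z: "z \<in> space ZZ"
  obtain \<eta> where \<eta>: "\<eta> \<in> arr" "z = dg \<eta>" using z by (rule spaceZ_E)
  show "laA (g_id G1 (rho z)) z = z"
    using \<eta> by (simp add: ts_eq inv_id s_obj id_right)
next
  fix z x y assume z: "z \<in> space ZZ" and x: "x \<in> g_arr G1" and y: "y \<in> g_arr G1"
    and xy: "g_s G1 x = g_r G1 y" and yz: "g_s G1 y = rho z"
  obtain \<eta> where \<eta>: "\<eta> \<in> arr" "z = dg \<eta>" using z by (rule spaceZ_E)
  obtain a1 \<gamma>1 b1 where xx: "x = (a1,\<gamma>1,b1)" "\<gamma>1 \<in> arr" using x by (rule G1_E)
  obtain a2 \<gamma>2 b2 where yy: "y = (a2,\<gamma>2,b2)" "\<gamma>2 \<in> arr" using y by (rule G1_E)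
  have e1: "ss \<gamma>1 = rr \<gamma>2" using xy xx yy by simp
  have e2: "ss \<gamma>2 = ss \<eta>" using yz yy \<eta> by (simp add: ts_eq)
  have c2: "ss \<eta> = rr (iv \<gamma>2)" using e2 yy by (simp add: r_inv)
  have c1: "ss (iv \<gamma>2) = rr (iv \<gamma>1)" using e1 xx yy by (simp add: r_inv s_inv)
  have "mm \<eta> (iv (mm \<gamma>1 \<gamma>2)) = mm \<eta> (mm (iv \<gamma>2) (iv \<gamma>1))"
    using inv_mul[OF xx(2) yy(2) e1] by simp
  also have "\<dots> = mm (mm \<eta> (iv \<gamma>2)) (iv \<gamma>1)"
    using assoc[OF \<eta>(1) inv_arr[OF yy(2)] inv_arr[OF xx(2)] c2 c1] by simp
  finally show "laA (g_mul G1 x y) z = laA x (laA y z)" using xx yy \<eta> by simp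
next
  show "(\<lambda>(x, z). laA x z) \<in> measurable (restrict_space (borel_of (g_top G1) \<Otimes>\<^sub>M ZZ)
           {(x, z). x \<in> g_arr G1 \<and> z \<in> space ZZ \<and> g_s G1 x = rho z}) ZZ"
  proof -
    let ?M = "restrict_space (borel_of (g_top G1) \<Otimes>\<^sub>M ZZ) {(x, z). x \<in> g_arr G1 \<and> z \<in> space ZZ \<and> g_s G1 x = rho z}"
    have f: "(\<lambda>p. fst (snd p)) \<in> measurable ?M (borel_of TG)"
      by (rule measurable_restrict_space1, rule measurable_compose[OF measurable_snd meas_fst_Z])
    have g: "(\<lambda>p. iv (fst (snd (fst p)))) \<in> measurable ?M (borel_of TG)"
      by (rule measurable_restrict_space1, rule measurable_compose[OF measurable_compose[OF measurable_fst
            continuous_map_measurable_borel[OF cont_proj_G1]] meas_inv])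
    have comp: "ss (fst (snd p)) = rr (iv (fst (snd (fst p))))" if "p \<in> space ?M" for p
    proof -
      obtain x z where pxz: "p = (x,z)" by (cases p)
      have p: "p = (x,z)" "x \<in> g_arr G1" "z \<in> space ZZ" "g_s G1 x = rho z"
        using that unfolding pxz by (simp_all add: space_restrict_space)
      obtain \<eta> where \<eta>: "\<eta> \<in> arr" "z = dg \<eta>" using p(3) by (rule spaceZ_E)
      obtain a \<gamma> b where xx: "x = (a,\<gamma>,b)" "\<gamma> \<in> arr" using p(2) by (rule G1_E)
      have "ss \<gamma> = ss \<eta>" using p(4) \<eta>(2) xx(1) by (simp add: ts_eq)
      then show ?thesis using p(1) \<eta> xx by (simp add: r_inv)
    qed
    have eq: "(\<lambda>(x, z). laA x z) = (\<lambda>p. dg (mm (fst (snd p)) (iv (fst (snd (fst p))))))"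
      by (auto simp: laA_def fun_eq_iff)
    show ?thesis unfolding eq by (rule meas_to_Z[OF meas_mul_comp[OF f g comp]])
  qed
qed

end




context setting
begin

lemma H_E: assumes "h \<in> g_arr H" shows "h \<in> arr" "c h = 0"
  using assms by (auto simp: H_arr)

lemma right_action: "right_borel_action H ZZ sig raA"
  unfolding right_borel_action_def H_otop H_r H_s H_mul H_id
proof (intro conjI ballI impI)
  show "sig \<in> measurable ZZ (borel_of TO)" by (rule sig_meas)
next
  fix z h assume z: "z \<in> space ZZ" and h: "h \<in> g_arr H" and e: "sig z = rr h"
  obtain \<eta> where \<eta>: "\<eta> \<in> arr" "z = dg \<eta>" using z by (rule spaceZ_E)
  have ha: "h \<in> arr" using H_E[OF h] by simp
  have cp: "ss (iv h) = rr \<eta>" using e \<eta> ha by (simp add: s_inv)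
  show "raA z h \<in> space ZZ" using \<eta> mul_arr[OF inv_arr[OF ha] \<eta>(1) cp] dg_in_Z by simp
  show "sig (raA z h) = ss h" using \<eta> r_mul[OF inv_arr[OF ha] \<eta>(1) cp] r_inv[OF ha] by simp
next
  fix z assume z: "z \<in> space ZZ"
  obtain \<eta> where \<eta>: "\<eta> \<in> arr" "z = dg \<eta>" using z by (rule spaceZ_E)
  show "raA z (ii (sig z)) = z" using \<eta> by (simp add: inv_id r_obj id_left)
next
  fix z x y assume z: "z \<in> space ZZ" and x: "x \<in> g_arr H" and y: "y \<in> g_arr H"
    and zx: "sig z = rr x" and xy: "ss x = rr y"
  obtain \<eta> where \<eta>: "\<eta> \<in> arr" "z = dg \<eta>" using z by (rule spaceZ_E)
  have xa: "x \<in> arr" and ya: "y \<in> arr" using H_E[OF x] H_E[OF y] by auto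
  have c1: "ss (iv y) = rr (iv x)" using xy xa ya by (simp add: s_inv r_inv)
  have c2: "ss (iv x) = rr \<eta>" using zx \<eta> xa by (simp add: s_inv)
  have "mm (iv (mm x y)) \<eta> = mm (mm (iv y) (iv x)) \<eta>" using inv_mul[OF xa ya xy] by simp
  also have "\<dots> = mm (iv y) (mm (iv x) \<eta>)"
    using assoc[OF inv_arr[OF ya] inv_arr[OF xa] \<eta>(1) c1 c2] .
  finally show "raA z (mm x y) = raA (raA z x) y" using \<eta> by simp
next
  show "(\<lambda>(z, x). raA z x) \<in> measurable (restrict_space (ZZ \<Otimes>\<^sub>M borel_of (g_top H))
          {(z, x). x \<in> g_arr H \<and> z \<in> space ZZ \<and> sig z = rr x}) ZZ"
  proof -
    let ?M = "restrict_space (ZZ \<Otimes>\<^sub>M borel_of (g_top H)) {(z, x). x \<in> g_arr H \<and> z \<in> space ZZ \<and> sig z = rr x}"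
    have g: "(\<lambda>p. fst (fst p)) \<in> measurable ?M (borel_of TG)"
      by (rule measurable_restrict_space1, rule measurable_compose[OF measurable_fst meas_fst_Z])
    have f: "(\<lambda>p. iv (snd p)) \<in> measurable ?M (borel_of TG)"
      by (rule measurable_restrict_space1, rule measurable_compose[OF measurable_compose[OF measurable_snd
            continuous_map_measurable_borel[OF cont_incl_H]] meas_inv])
    have comp: "ss (iv (snd p)) = rr (fst (fst p))" if "p \<in> space ?M" for p
    proof -
      obtain z h where pzh: "p = (z,h)" by (cases p)
      have p: "h \<in> g_arr H" "z \<in> space ZZ" "sig z = rr h"
        using that unfolding pzh by (simp_all add: space_restrict_space)
      obtain \<eta> where \<eta>: "\<eta> \<in> arr" "z = dg \<eta>" using p(2) by (rule spaceZ_E)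
      show ?thesis using p \<eta> H_E[OF p(1)] pzh by (simp add: s_inv)
    qed
    have eq: "(\<lambda>(z, x). raA z x) = (\<lambda>p. dg (mm (iv (snd p)) (fst (fst p))))"
      by (auto simp: raA_def fun_eq_iff)
    show ?thesis unfolding eq by (rule meas_to_Z[OF meas_mul_comp[OF f g comp]])
  qed
qed

lemma left_free_G1: "left_free G1 ZZ rho laA"
  unfolding left_free_def
proof (intro ballI impI)
  fix z x assume z: "z \<in> space ZZ" and x: "x \<in> g_arr G1" and sx: "g_s G1 x = rho z" and fx: "laA x z = z"
  obtain \<eta> where \<eta>: "\<eta> \<in> arr" "z = dg \<eta>" using z by (rule spaceZ_E)
  obtain a \<gamma> b where xx: "x = (a,\<gamma>,b)" "\<gamma> \<in> arr" "b = a + c \<gamma>" using x by (rule G1_E)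
  have e: "ss \<gamma> = ss \<eta>" "b = c \<eta>" using sx \<eta> xx by (auto simp: ts_eq)
  have cp: "ss \<eta> = rr (iv \<gamma>)" using e xx by (simp add: r_inv)
  have "mm \<eta> (iv \<gamma>) = \<eta>" using fx \<eta> xx by simp
  from mul_eq_self_right[OF inv_arr[OF xx(2)] \<eta>(1) cp this]
  have "iv \<gamma> = ii (ss \<eta>)" .
  then have g: "\<gamma> = ii (ss \<eta>)" using inv_inv[OF xx(2)] inv_id[OF s_obj[OF \<eta>(1)]] by metis
  then have "c \<gamma> = 0" using c_id[OF s_obj[OF \<eta>(1)]] by simp
  then have "a = c \<eta>" using xx(3) e(2) by simp
  then show "x = g_id G1 (rho z)" using xx g e \<eta> by (simp add: ts_eq)
qed

lemma right_free_H: "right_free H ZZ sig raA"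
  unfolding right_free_def H_r H_id
proof (intro ballI impI)
  fix z h assume z: "z \<in> space ZZ" and h: "h \<in> g_arr H" and e: "sig z = rr h" and fx: "raA z h = z"
  obtain \<eta> where \<eta>: "\<eta> \<in> arr" "z = dg \<eta>" using z by (rule spaceZ_E)
  have ha: "h \<in> arr" using H_E[OF h] by simp
  have cp: "ss (iv h) = rr \<eta>" using e \<eta> ha by (simp add: s_inv)
  have "mm (iv h) \<eta> = \<eta>" using fx \<eta> by simp
  from mul_eq_self_left[OF inv_arr[OF ha] \<eta>(1) cp this] have "iv h = ii (rr \<eta>)" .
  then have "h = ii (rr \<eta>)" using inv_inv[OF ha] inv_id[OF r_obj[OF \<eta>(1)]] by metis
  then show "h = ii (sig z)" using \<eta> by simp
qed

lemma commute:
  "\<forall>z\<in>space ZZ. \<forall>x\<in>g_arr G1. \<forall>y\<in>g_arr H. g_s G1 x = rho z \<longrightarrow> sig z = g_r H y \<longrightarrow>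
        rho (raA z y) = rho z \<and> sig (laA x z) = sig z \<and> raA (laA x z) y = laA x (raA z y)"
proof (intro ballI impI)
  fix z x h assume z: "z \<in> space ZZ" and x: "x \<in> g_arr G1" and h: "h \<in> g_arr H"
    and sx: "g_s G1 x = rho z" and zh: "sig z = g_r H h"
  obtain \<eta> where \<eta>: "\<eta> \<in> arr" "z = dg \<eta>" using z by (rule spaceZ_E)
  obtain a \<gamma> b where xx: "x = (a,\<gamma>,b)" "\<gamma> \<in> arr" "b = a + c \<gamma>" using x by (rule G1_E)
  have e: "ss \<gamma> = ss \<eta>" "b = c \<eta>" using sx \<eta> xx by (auto simp: ts_eq)
  have ha: "h \<in> arr" "c h = 0" using H_E[OF h] by auto
  have cp: "ss (iv h) = rr \<eta>" using zh \<eta> ha by (simp add: s_inv)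
  have cp2: "ss \<eta> = rr (iv \<gamma>)" using e xx by (simp add: r_inv)
  have "ts (mm (iv h) \<eta>) = ts \<eta>"
    using s_mul[OF inv_arr[OF ha(1)] \<eta>(1) cp] c_mul[OF inv_arr[OF ha(1)] \<eta>(1) cp] c_inv[OF ha(1)] ha(2)
    by (simp add: ts_eq)
  then show "rho (raA z h) = rho z \<and> sig (laA x z) = sig z \<and> raA (laA x z) h = laA x (raA z h)"
    using \<eta> xx ts_mul_inv(3)[OF \<eta>(1) xx(2) e(1)[symmetric]]
      assoc[OF inv_arr[OF ha(1)] \<eta>(1) inv_arr[OF xx(2)] cp cp2] by simp
qed

end




context setting
begin

definition "gL \<eta> = (c \<eta>, iv \<eta>, (0::'q))"

lemma gL_arr: assumes "\<eta> \<in> arr" shows "gL \<eta> \<in> g_arr G1"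
proof -
  have "(ss \<eta>, c \<eta>) \<in> YY" using assms by (auto simp: YY_mem)
  moreover have "(rr \<eta>, 0) \<in> YY"
    using assms id_arr[OF r_obj[OF assms]] s_id[OF r_obj[OF assms]] c_id[OF r_obj[OF assms]]
    by (auto simp: YY_mem)
  ultimately show ?thesis unfolding gL_def G1_mem
    using assms by (simp add: inv_arr r_inv s_inv c_inv)
qed

lemma gL_r: "\<eta> \<in> arr \<Longrightarrow> g_r G1 (gL \<eta>) = ts \<eta>"
  unfolding gL_def by (simp add: r_inv ts_eq)

lemma cont_gL: "continuous_map TG (g_top G1) gL"
  unfolding G1_top
proof (rule continuous_map_into_subtopology)
  show "continuous_map TG QT gL"
    unfolding gL_def using cc cont_inv by (intro continuous_map_pairedI) auto
  show "gL \<in> topspace TG \<rightarrow> g_arr G1" using gL_arr topG by auto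
qed

lemma meas_gL: "gL \<in> measurable (borel_of TG) (borel_of (g_top G1))"
  by (rule continuous_map_measurable_borel[OF cont_gL])

lemma cont_ltrans:
  assumes x: "x \<in> g_arr G1"
  shows "continuous_map (subtopology (g_top G1) (range_fibre G1 (g_s G1 x))) (g_top G1) (g_mul G1 x)"
proof -
  obtain a \<gamma> b where xx: "x = (a,\<gamma>,b)" "\<gamma> \<in> arr" "b = a + c \<gamma>" "(rr \<gamma>, a) \<in> YY" "(ss \<gamma>, b) \<in> YY"
    using x by (rule G1_E)
  let ?S = "subtopology (g_top G1) (range_fibre G1 (g_s G1 x))"
  have tsS: "topspace ?S = g_arr G1 \<inter> range_fibre G1 (ss \<gamma>, b)" using xx by (simp add: G1_topspace)
  have pr: "continuous_map ?S TG (\<lambda>y. fst (snd y))"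
    by (rule continuous_map_from_subtopology[OF cont_proj_G1])
  have pair: "continuous_map ?S (subtopology (prod_topology TG TG) (composable G)) (\<lambda>y. (\<gamma>, fst (snd y)))"
  proof (rule continuous_map_into_subtopology)
    show "continuous_map ?S (prod_topology TG TG) (\<lambda>y. (\<gamma>, fst (snd y)))"
      using pr xx topG by (intro continuous_map_pairedI) auto
    show "(\<lambda>y. (\<gamma>, fst (snd y))) \<in> topspace ?S \<rightarrow> composable G"
    proof
      fix y assume "y \<in> topspace ?S"
      then have y: "y \<in> g_arr G1" "g_r G1 y = (ss \<gamma>, b)" using xx(1) unfolding tsS range_fibre_def by auto
      obtain a' \<gamma>' b' where yy: "y = (a',\<gamma>',b')" "\<gamma>' \<in> arr"
        using y(1) by (rule G1_E)
      have "rr \<gamma>' = ss \<gamma>" using y(2) yy by simp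
      then show "(\<gamma>, fst (snd y)) \<in> composable G" using yy xx by (simp add: composable_def)
    qed
  qed
  have mid: "continuous_map ?S TG (\<lambda>y. mm \<gamma> (fst (snd y)))"
    using continuous_map_compose[OF pair cont_mul] by (simp add: o_def)
  have ss: "continuous_map ?S euclidean (\<lambda>y. snd (snd y))"
  proof -
    have "continuous_map QT euclidean (snd \<circ> snd)"
      by (rule continuous_map_compose[OF continuous_map_snd continuous_map_snd])
    then show ?thesis unfolding G1_top
      by (intro continuous_map_from_subtopology) (simp add: o_def)
  qed
  have h0: "continuous_map ?S (subtopology QT (g_arr G1)) (\<lambda>y. (a, mm \<gamma> (fst (snd y)), snd (snd y)))"
  proof (rule continuous_map_into_subtopology)
    show "continuous_map ?S QT (\<lambda>y. (a, mm \<gamma> (fst (snd y)), snd (snd y)))"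
      using mid ss by (intro continuous_map_pairedI) auto
    show "(\<lambda>y. (a, mm \<gamma> (fst (snd y)), snd (snd y))) \<in> topspace ?S \<rightarrow> g_arr G1"
    proof
      fix y assume "y \<in> topspace ?S"
      then have y: "y \<in> g_arr G1" "g_r G1 y = (ss \<gamma>, b)" using xx(1) unfolding tsS range_fibre_def by auto
      obtain a' \<gamma>' b' where yy: "y = (a',\<gamma>',b')" "\<gamma>' \<in> arr" "b' = a' + c \<gamma>'" "(rr \<gamma>', a') \<in> YY" "(ss \<gamma>', b') \<in> YY"
        using y(1) by (rule G1_E)
      have e: "rr \<gamma>' = ss \<gamma>" "a' = b" using y(2) yy by auto
      have "mm \<gamma> \<gamma>' \<in> arr" "rr (mm \<gamma> \<gamma>') = rr \<gamma>" "ss (mm \<gamma> \<gamma>') = ss \<gamma>'" "c (mm \<gamma> \<gamma>') = c \<gamma> + c \<gamma>'"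
        using mul_arr[OF xx(2) yy(2) e(1)[symmetric]] r_mul[OF xx(2) yy(2) e(1)[symmetric]]
          s_mul[OF xx(2) yy(2) e(1)[symmetric]] c_mul[OF xx(2) yy(2) e(1)[symmetric]] by auto
      then show "(a, mm \<gamma> (fst (snd y)), snd (snd y)) \<in> g_arr G1"
        unfolding G1_mem using yy xx e by (simp add: add.assoc)
    qed
  qed
  have h: "continuous_map ?S (g_top G1) (\<lambda>y. (a, mm \<gamma> (fst (snd y)), snd (snd y)))"
    using h0 unfolding G1_top by assumption
  show ?thesis
  proof (rule continuous_map_eq[OF h])
    fix y assume "y \<in> topspace ?S"
    obtain a' \<gamma>' b' where "y = (a',\<gamma>',b')" by (cases y)
    then show "(a, mm \<gamma> (fst (snd y)), snd (snd y)) = g_mul G1 x y" using xx by simp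
  qed
qed

lemma left_proper_G1: "left_proper G1 ZZ rho laA"
  unfolding left_proper_def
proof (intro exI[of _ "\<lambda>z. return (borel_of (g_top G1)) (gL (fst z))"] conjI ballI impI)
  fix z assume z: "z \<in> space ZZ"
  obtain \<eta> where \<eta>: "\<eta> \<in> arr" "z = dg \<eta>" using z by (rule spaceZ_E)
  have gin: "gL \<eta> \<in> space (borel_of (g_top G1))" using gL_arr[OF \<eta>(1)] by (simp add: G1_topspace)
  show "prob_space (return (borel_of (g_top G1)) (gL (fst z)))" using gin \<eta> by (simp add: prob_space_return)
  show "sets (return (borel_of (g_top G1)) (gL (fst z))) = sets (borel_of (g_top G1))" by simp
  have "gL \<eta> \<in> range_fibre G1 (rho z)" using gL_arr[OF \<eta>(1)] gL_r[OF \<eta>(1)] \<eta> by (simp add: range_fibre_def)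
  then show "emeasure (return (borel_of (g_top G1)) (gL (fst z))) (range_fibre G1 (rho z)) = 1"
    using borel_of_closed[OF range_fibre_G1_closed] \<eta> by simp
next
  fix A assume A: "A \<in> sets (borel_of (g_top G1))"
  have "(\<lambda>z. indicator A (gL (fst z)) :: ennreal) \<in> borel_measurable ZZ"
    by (rule measurable_compose[OF measurable_compose[OF meas_fst_Z meas_gL] borel_measurable_indicator[OF A]])
  then show "(\<lambda>z. emeasure (return (borel_of (g_top G1)) (gL (fst z))) A) \<in> borel_measurable ZZ"
    using A by simp
next
  fix z x A assume z: "z \<in> space ZZ" and x: "x \<in> g_arr G1" and sx: "g_s G1 x = rho z"
    and A: "A \<in> sets (borel_of (g_top G1))"
  obtain \<eta> where \<eta>: "\<eta> \<in> arr" "z = dg \<eta>" using z by (rule spaceZ_E)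
  obtain a \<gamma> b where xx: "x = (a,\<gamma>,b)" "\<gamma> \<in> arr" "b = a + c \<gamma>" using x by (rule G1_E)
  have e: "ss \<gamma> = ss \<eta>" "b = c \<eta>" using sx \<eta> xx by (auto simp: ts_eq)
  define T where "T = {y \<in> range_fibre G1 (g_s G1 x). g_mul G1 x y \<in> A}"
  have T: "T \<in> sets (borel_of (g_top G1))"
    unfolding T_def by (rule borel_of_translate_set[OF range_fibre_G1_closed cont_ltrans[OF x] A])
  have inF: "gL \<eta> \<in> range_fibre G1 (g_s G1 x)"
    using gL_arr[OF \<eta>(1)] gL_r[OF \<eta>(1)] sx \<eta> by (simp add: range_fibre_def)
  have cp: "ss \<eta> = rr (iv \<gamma>)" using e xx by (simp add: r_inv)
  have "gL (mm \<eta> (iv \<gamma>)) = g_mul G1 x (gL \<eta>)"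
  proof -
    have ce: "c \<eta> = a + c \<gamma>" using e(2) xx(3) by simp
    have "c (mm \<eta> (iv \<gamma>)) = c \<eta> + - c \<gamma>"
      using c_mul[OF \<eta>(1) inv_arr[OF xx(2)] cp] c_inv[OF xx(2)] by simp
    also have "\<dots> = a" unfolding ce by (simp add: add.assoc)
    finally have "c (mm \<eta> (iv \<gamma>)) = a" .
    moreover have "iv (mm \<eta> (iv \<gamma>)) = mm \<gamma> (iv \<eta>)"
      using inv_mul[OF \<eta>(1) inv_arr[OF xx(2)] cp] inv_inv[OF xx(2)] by simp
    ultimately show ?thesis using xx unfolding gL_def by simp
  qed
  then have "indicator A (gL (mm \<eta> (iv \<gamma>))) = (indicator T (gL \<eta>) :: ennreal)"
    using inF unfolding T_def by (simp add: indicator_def)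
  then show "emeasure (return (borel_of (g_top G1)) (gL (fst (laA x z)))) A =
         emeasure (return (borel_of (g_top G1)) (gL (fst z))) {y \<in> range_fibre G1 (g_s G1 x). g_mul G1 x y \<in> A}"
    using A T \<eta> xx unfolding T_def by simp
qed

end




context setting
begin

lemma ts_meas: "ts \<in> measurable (borel_of TG) (borel_of (subtopology PT YY))"
proof -
  have "continuous_map TG (subtopology PT YY) ts"
    by (rule continuous_map_into_subtopology[OF cont_ts]) (auto simp: topG)
  then show ?thesis by (rule continuous_map_measurable_borel)
qed

lemma ts_raA:
  assumes "\<eta> \<in> arr" "h \<in> g_arr H" "rr h = rr \<eta>"
  shows "ts (mm (iv h) \<eta>) = ts \<eta>" "mm (iv h) \<eta> \<in> arr"
proof -
  have ha: "h \<in> arr" "c h = 0" using H_E[OF assms(2)] by auto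
  have cp: "ss (iv h) = rr \<eta>" using assms ha by (simp add: s_inv)
  show "ts (mm (iv h) \<eta>) = ts \<eta>"
    using s_mul[OF inv_arr[OF ha(1)] assms(1) cp] c_mul[OF inv_arr[OF ha(1)] assms(1) cp] c_inv[OF ha(1)] ha(2)
    by (simp add: ts_eq)
  show "mm (iv h) \<eta> \<in> arr" using mul_arr[OF inv_arr[OF ha(1)] assms(1) cp] .
qed

lemma KL:
  assumes e: "\<eta> \<in> arr" "\<eta>' \<in> arr" "ts \<eta> = ts \<eta>'"
  shows "\<exists>h\<in>g_arr H. rr \<eta> = rr h \<and> dg \<eta>' = raA (dg \<eta>) h"
proof -
  have s: "ss \<eta> = ss \<eta>'" and cq: "c \<eta> = c \<eta>'" using e(3) by (auto simp: ts_eq)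
  have cp: "ss \<eta> = rr (iv \<eta>')" using s e by (simp add: r_inv)
  define h where "h = mm \<eta> (iv \<eta>')"
  have ha: "h \<in> arr" unfolding h_def using mul_arr[OF e(1) inv_arr[OF e(2)] cp] .
  have "c h = 0" unfolding h_def using c_mul[OF e(1) inv_arr[OF e(2)] cp] c_inv[OF e(2)] cq by simp
  then have hH: "h \<in> g_arr H" using ha by (simp add: H_arr)
  have rh: "rr h = rr \<eta>" unfolding h_def using r_mul[OF e(1) inv_arr[OF e(2)] cp] .
  have cp2: "ss \<eta>' = rr (iv \<eta>)" using s e by (simp add: r_inv)
  have cp3: "ss (iv \<eta>) = rr \<eta>" using e by (simp add: s_inv)
  have "iv h = mm \<eta>' (iv \<eta>)" unfolding h_def using inv_mul[OF e(1) inv_arr[OF e(2)] cp] inv_inv[OF e(2)] by simp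
  then have "mm (iv h) \<eta> = mm \<eta>' (mm (iv \<eta>) \<eta>)"
    using assoc[OF e(2) inv_arr[OF e(1)] e(1) cp2 cp3] by simp
  also have "\<dots> = \<eta>'" using inv_left[OF e(1)] s id_right[OF e(2)] by simp
  finally show ?thesis using hH rh by (intro bexI[of _ h]) auto
qed

lemma KL2:
  assumes e: "\<eta> \<in> arr" "\<eta>' \<in> arr" "rr \<eta> = rr \<eta>'"
  shows "\<exists>x\<in>g_arr G1. g_s G1 x = ts \<eta> \<and> dg \<eta>' = laA x (dg \<eta>)"
proof -
  have cp: "ss (iv \<eta>') = rr \<eta>" using e by (simp add: s_inv)
  define \<gamma> where "\<gamma> = mm (iv \<eta>') \<eta>"
  have ga: "\<gamma> \<in> arr" unfolding \<gamma>_def using mul_arr[OF inv_arr[OF e(2)] e(1) cp] .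
  have cg: "c \<gamma> = - c \<eta>' + c \<eta>" unfolding \<gamma>_def using c_mul[OF inv_arr[OF e(2)] e(1) cp] c_inv[OF e(2)] by simp
  have rg: "rr \<gamma> = ss \<eta>'" unfolding \<gamma>_def using r_mul[OF inv_arr[OF e(2)] e(1) cp] r_inv[OF e(2)] by simp
  have sg: "ss \<gamma> = ss \<eta>" unfolding \<gamma>_def using s_mul[OF inv_arr[OF e(2)] e(1) cp] .
  have xin: "(c \<eta>', \<gamma>, c \<eta>) \<in> g_arr G1"
    unfolding G1_mem using ga cg rg sg e by (auto simp: YY_mem add.assoc[symmetric])
  have ig: "iv \<gamma> = mm (iv \<eta>) \<eta>'" unfolding \<gamma>_def using inv_mul[OF inv_arr[OF e(2)] e(1) cp] inv_inv[OF e(2)] by simp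
  have c1: "ss \<eta> = rr (iv \<eta>)" using e by (simp add: r_inv)
  have c2: "ss (iv \<eta>) = rr \<eta>'" using e by (simp add: s_inv)
  have "mm \<eta> (iv \<gamma>) = mm (mm \<eta> (iv \<eta>)) \<eta>'" unfolding ig using assoc[OF e(1) inv_arr[OF e(1)] e(2) c1 c2] by simp
  also have "\<dots> = \<eta>'" using inv_right[OF e(1)] e(3) id_left[OF e(2)] by simp
  finally show ?thesis using xin sg by (intro bexI[of _ "(c \<eta>', \<gamma>, c \<eta>)"]) (auto simp: ts_eq)
qed

lemma quotient_sig: "induces_quotient_borel_iso ZZ
        (\<lambda>z z'. \<exists>x\<in>g_arr G1. g_s G1 x = rho z \<and> z' = laA x z) sig (borel_of (g_otop H))"
  unfolding induces_quotient_borel_iso_def H_otop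
proof (intro conjI ballI impI)
  fix z z' assume z: "z \<in> space ZZ" and z': "z' \<in> space ZZ"
  obtain \<eta> where \<eta>: "\<eta> \<in> arr" "z = dg \<eta>" using z by (rule spaceZ_E)
  obtain \<eta>' where \<eta>': "\<eta>' \<in> arr" "z' = dg \<eta>'" using z' by (rule spaceZ_E)
  show "sig z = sig z' \<longleftrightarrow> (\<exists>x\<in>g_arr G1. g_s G1 x = rho z \<and> z' = laA x z)"
  proof
    assume "sig z = sig z'"
    then show "\<exists>x\<in>g_arr G1. g_s G1 x = rho z \<and> z' = laA x z" using KL2[OF \<eta>(1) \<eta>'(1)] \<eta> \<eta>' by simp
  next
    assume "\<exists>x\<in>g_arr G1. g_s G1 x = rho z \<and> z' = laA x z"
    then obtain x where x: "x \<in> g_arr G1" "g_s G1 x = rho z" "z' = laA x z" by blast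
    obtain a \<gamma> b where xx: "x = (a,\<gamma>,b)" "\<gamma> \<in> arr" using x(1) by (rule G1_E)
    have "ss \<gamma> = ss \<eta>" using x(2) xx \<eta> by (simp add: ts_eq)
    then show "sig z = sig z'" using ts_mul_inv(3)[OF \<eta>(1) xx(2)] x(3) xx \<eta> by simp
  qed
next
  show "sig ` space ZZ = space (borel_of TO)"
  proof
    show "sig ` space ZZ \<subseteq> space (borel_of TO)" using r_obj by (auto simp: spaceZ topO)
    show "space (borel_of TO) \<subseteq> sig ` space ZZ"
    proof
      fix u assume "u \<in> space (borel_of TO)"
      then have u: "u \<in> obj" by (simp add: topO)
      then have "u = sig (dg (ii u))" by (simp add: r_id)
      then show "u \<in> sig ` space ZZ" using dg_in_Z[OF id_arr[OF u]] by blast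
    qed
  qed
next
  show "sig \<in> measurable ZZ (borel_of TO)" by (rule sig_meas)
next
  fix S assume S: "S \<in> sets ZZ" and sat: "\<forall>z\<in>S. \<forall>z'\<in>space ZZ. (\<exists>x\<in>g_arr G1. g_s G1 x = rho z \<and> z' = laA x z) \<longrightarrow> z' \<in> S"
  have meas: "(\<lambda>u. dg (ii u)) \<in> measurable (borel_of TO) ZZ"
    by (rule meas_to_Z[OF continuous_map_measurable_borel[OF cont_id]])
  have Ssub: "S \<subseteq> space ZZ" using sets.sets_into_space[OF S] .
  have "sig ` S = (\<lambda>u. dg (ii u)) -` S \<inter> space (borel_of TO)"
  proof
    show "sig ` S \<subseteq> (\<lambda>u. dg (ii u)) -` S \<inter> space (borel_of TO)"
    proof
      fix u assume "u \<in> sig ` S"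
      then obtain z where z: "z \<in> S" "u = sig z" by blast
      obtain \<eta> where \<eta>: "\<eta> \<in> arr" "z = dg \<eta>" using Ssub z(1) by (blast elim: spaceZ_E)
      have ua: "ii u \<in> arr" "rr \<eta> = rr (ii u)" using z \<eta> by (simp_all add: r_obj id_arr r_id)
      from KL2[OF \<eta>(1) ua] have "dg (ii u) \<in> S"
        using sat z(1) \<eta> dg_in_Z[OF ua(1)] by auto
      then show "u \<in> (\<lambda>u. dg (ii u)) -` S \<inter> space (borel_of TO)" using z \<eta> by (simp add: r_obj topO)
    qed
    show "(\<lambda>u. dg (ii u)) -` S \<inter> space (borel_of TO) \<subseteq> sig ` S"
    proof
      fix u assume u: "u \<in> (\<lambda>u. dg (ii u)) -` S \<inter> space (borel_of TO)"
      then have "u = sig (dg (ii u))" by (simp add: topO r_id)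
      then show "u \<in> sig ` S" using u by blast
    qed
  qed
  also have "\<dots> \<in> sets (borel_of TO)" using measurable_sets[OF meas S] .
  finally show "sig ` S \<in> sets (borel_of TO)" .
qed

context
  fixes \<psi> :: "'u \<times> 'q \<Rightarrow> 'g"
  assumes psi_in: "\<And>y. y \<in> YY \<Longrightarrow> \<psi> y \<in> arr" and psi_ts: "\<And>y. y \<in> YY \<Longrightarrow> ts (\<psi> y) = y"
    and psi_meas: "\<psi> \<in> measurable (borel_of (subtopology PT YY)) (borel_of TG)"
begin

lemma spaceM1: "space (borel_of (g_otop G1)) = YY"
  unfolding G1_otop using YY_sub topP by auto

lemma quotient_rho: "induces_quotient_borel_iso ZZ
        (\<lambda>z z'. \<exists>y\<in>g_arr H. sig z = g_r H y \<and> z' = raA z y) rho (borel_of (g_otop G1))"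
  unfolding induces_quotient_borel_iso_def H_r
proof (intro conjI ballI impI)
  fix z z' assume z: "z \<in> space ZZ" and z': "z' \<in> space ZZ"
  obtain \<eta> where \<eta>: "\<eta> \<in> arr" "z = dg \<eta>" using z by (rule spaceZ_E)
  obtain \<eta>' where \<eta>': "\<eta>' \<in> arr" "z' = dg \<eta>'" using z' by (rule spaceZ_E)
  show "rho z = rho z' \<longleftrightarrow> (\<exists>y\<in>g_arr H. sig z = rr y \<and> z' = raA z y)"
  proof
    assume "rho z = rho z'"
    then show "\<exists>y\<in>g_arr H. sig z = rr y \<and> z' = raA z y" using KL[OF \<eta>(1) \<eta>'(1)] \<eta> \<eta>' by simp
  next
    assume "\<exists>y\<in>g_arr H. sig z = rr y \<and> z' = raA z y"
    then obtain h where h: "h \<in> g_arr H" "sig z = rr h" "z' = raA z h" by blast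
    show "rho z = rho z'" using ts_raA[OF \<eta>(1) h(1)] h \<eta> by simp
  qed
next
  show "rho ` space ZZ = space (borel_of (g_otop G1))"
    unfolding spaceM1 spaceZ by (auto simp: image_image)
next
  show "rho \<in> measurable ZZ (borel_of (g_otop G1))" by (rule rho_meas)
next
  fix S assume S: "S \<in> sets ZZ" and sat: "\<forall>z\<in>S. \<forall>z'\<in>space ZZ. (\<exists>y\<in>g_arr H. sig z = rr y \<and> z' = raA z y) \<longrightarrow> z' \<in> S"
  have meas: "(\<lambda>y. dg (\<psi> y)) \<in> measurable (borel_of (g_otop G1)) ZZ"
    unfolding G1_otop by (rule meas_to_Z[OF psi_meas])
  have Ssub: "S \<subseteq> space ZZ" using sets.sets_into_space[OF S] .
  have "rho ` S = (\<lambda>y. dg (\<psi> y)) -` S \<inter> space (borel_of (g_otop G1))"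
  proof
    show "rho ` S \<subseteq> (\<lambda>y. dg (\<psi> y)) -` S \<inter> space (borel_of (g_otop G1))"
    proof
      fix y assume "y \<in> rho ` S"
      then obtain z where z: "z \<in> S" "y = rho z" by blast
      obtain \<eta> where \<eta>: "\<eta> \<in> arr" "z = dg \<eta>" using Ssub z(1) by (blast elim: spaceZ_E)
      have yY: "y \<in> YY" using z \<eta> by simp
      have pa: "\<psi> y \<in> arr" "ts \<eta> = ts (\<psi> y)" using psi_in[OF yY] psi_ts[OF yY] z \<eta> by auto
      from KL[OF \<eta>(1) pa] have "dg (\<psi> y) \<in> S"
        using sat z(1) \<eta> dg_in_Z[OF pa(1)] by auto
      then show "y \<in> (\<lambda>y. dg (\<psi> y)) -` S \<inter> space (borel_of (g_otop G1))" using yY spaceM1 by simp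
    qed
    show "(\<lambda>y. dg (\<psi> y)) -` S \<inter> space (borel_of (g_otop G1)) \<subseteq> rho ` S"
    proof
      fix y assume y: "y \<in> (\<lambda>y. dg (\<psi> y)) -` S \<inter> space (borel_of (g_otop G1))"
      then have "y \<in> YY" using spaceM1 by simp
      then have "y = rho (dg (\<psi> y))" using psi_ts by simp
      then show "y \<in> rho ` S" using y by blast
    qed
  qed
  also have "\<dots> \<in> sets (borel_of (g_otop G1))" using measurable_sets[OF meas S] .
  finally show "rho ` S \<in> sets (borel_of (g_otop G1))" .
qed

definition "gR \<eta> = mm (\<psi> (ts \<eta>)) (iv \<eta>)"

lemma gR_facts:
  assumes e: "\<eta> \<in> arr" shows "gR \<eta> \<in> g_arr H" "ss (gR \<eta>) = rr \<eta>"
proof -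
  have yY: "ts \<eta> \<in> YY" using e by simp
  have pa: "\<psi> (ts \<eta>) \<in> arr" "ts (\<psi> (ts \<eta>)) = ts \<eta>" using psi_in[OF yY] psi_ts[OF yY] by auto
  then have s: "ss (\<psi> (ts \<eta>)) = ss \<eta>" and cq: "c (\<psi> (ts \<eta>)) = c \<eta>" by (auto simp: ts_eq)
  have cp: "ss (\<psi> (ts \<eta>)) = rr (iv \<eta>)" using s e by (simp add: r_inv)
  have "gR \<eta> \<in> arr" unfolding gR_def using mul_arr[OF pa(1) inv_arr[OF e] cp] .
  moreover have "c (gR \<eta>) = 0" unfolding gR_def using c_mul[OF pa(1) inv_arr[OF e] cp] c_inv[OF e] cq by simp
  ultimately show "gR \<eta> \<in> g_arr H" by (simp add: H_arr)
  show "ss (gR \<eta>) = rr \<eta>" unfolding gR_def using s_mul[OF pa(1) inv_arr[OF e] cp] s_inv[OF e] by simp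
qed

lemma meas_gR: "gR \<in> measurable (borel_of TG) (borel_of (g_top H))"
  unfolding H_top
proof (rule meas_into_subtopology)
  have comp: "ss (\<psi> (ts \<eta>)) = rr (iv \<eta>)" if "\<eta> \<in> space (borel_of TG)" for \<eta>
  proof -
    have e: "\<eta> \<in> arr" using that topG by simp
    have yY: "ts \<eta> \<in> YY" using e by simp
    have "ss (\<psi> (ts \<eta>)) = ss \<eta>" using psi_ts[OF yY] by (simp add: ts_eq)
    then show ?thesis using e by (simp add: r_inv)
  qed
  show "gR \<in> measurable (borel_of TG) (borel_of TG)"
    unfolding gR_def[abs_def]
    by (rule meas_mul_comp[OF measurable_compose[OF ts_meas psi_meas] meas_inv comp])
  show "gR \<in> space (borel_of TG) \<rightarrow> g_arr H" using gR_facts topG by auto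
qed

lemma cont_rtrans:
  assumes h: "h \<in> g_arr H"
  shows "continuous_map (subtopology (g_top H) (source_fibre H (rr h))) (g_top H) (\<lambda>y. mm y h)"
proof -
  let ?S = "subtopology (g_top H) (source_fibre H (rr h))"
  have ha: "h \<in> arr" "c h = 0" using H_E[OF h] by auto
  have tsS: "topspace ?S = g_arr H \<inter> source_fibre H (rr h)" by (simp add: H_topspace)
  have pair: "continuous_map ?S (subtopology (prod_topology TG TG) (composable G)) (\<lambda>y. (y, h))"
  proof (rule continuous_map_into_subtopology)
    show "continuous_map ?S (prod_topology TG TG) (\<lambda>y. (y, h))"
      using continuous_map_from_subtopology[OF cont_incl_H] ha topG by (intro continuous_map_pairedI) auto
    show "(\<lambda>y. (y, h)) \<in> topspace ?S \<rightarrow> composable G"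
      unfolding tsS using ha by (auto simp: source_fibre_def composable_def H_arr)
  qed
  have "continuous_map ?S TG (\<lambda>y. mm y h)"
    using continuous_map_compose[OF pair cont_mul] by (simp add: o_def)
  then have "continuous_map ?S (subtopology TG (g_arr H)) (\<lambda>y. mm y h)"
  proof (rule continuous_map_into_subtopology)
    show "(\<lambda>y. mm y h) \<in> topspace ?S \<rightarrow> g_arr H"
    proof
      fix y assume "y \<in> topspace ?S"
      then have y: "y \<in> arr" "c y = 0" "ss y = rr h" unfolding tsS source_fibre_def by (auto simp: H_arr)
      show "mm y h \<in> g_arr H" using mul_arr[OF y(1) ha(1) y(3)] c_mul[OF y(1) ha(1) y(3)] y ha
        by (simp add: H_arr)
    qed
  qed
  then show ?thesis unfolding H_top by assumption
qed

lemma right_proper_H: "right_proper H ZZ sig raA"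
  unfolding right_proper_def H_r H_mul
proof (intro exI[of _ "\<lambda>z. return (borel_of (g_top H)) (gR (fst z))"] conjI ballI impI)
  fix z assume z: "z \<in> space ZZ"
  obtain \<eta> where \<eta>: "\<eta> \<in> arr" "z = dg \<eta>" using z by (rule spaceZ_E)
  have gin: "gR \<eta> \<in> space (borel_of (g_top H))" using gR_facts[OF \<eta>(1)] by (simp add: H_topspace)
  show "prob_space (return (borel_of (g_top H)) (gR (fst z)))" using gin \<eta> by (simp add: prob_space_return)
  show "sets (return (borel_of (g_top H)) (gR (fst z))) = sets (borel_of (g_top H))" by simp
  have "gR \<eta> \<in> source_fibre H (sig z)" using gR_facts[OF \<eta>(1)] \<eta> by (simp add: source_fibre_def)
  then show "emeasure (return (borel_of (g_top H)) (gR (fst z))) (source_fibre H (sig z)) = 1"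
    using borel_of_closed[OF source_fibre_H_closed] \<eta> by simp
next
  fix A assume A: "A \<in> sets (borel_of (g_top H))"
  have "(\<lambda>z. indicator A (gR (fst z)) :: ennreal) \<in> borel_measurable ZZ"
    by (rule measurable_compose[OF measurable_compose[OF meas_fst_Z meas_gR] borel_measurable_indicator[OF A]])
  then show "(\<lambda>z. emeasure (return (borel_of (g_top H)) (gR (fst z))) A) \<in> borel_measurable ZZ"
    using A by simp
next
  fix z h A assume z: "z \<in> space ZZ" and h: "h \<in> g_arr H" and zh: "sig z = rr h"
    and A: "A \<in> sets (borel_of (g_top H))"
  obtain \<eta> where \<eta>: "\<eta> \<in> arr" "z = dg \<eta>" using z by (rule spaceZ_E)
  have ha: "h \<in> arr" "c h = 0" using H_E[OF h] by auto
  have rh: "rr h = rr \<eta>" using zh \<eta> by simp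
  define T where "T = {y \<in> source_fibre H (rr h). mm y h \<in> A}"
  have T: "T \<in> sets (borel_of (g_top H))"
    unfolding T_def by (rule borel_of_translate_set[OF source_fibre_H_closed cont_rtrans[OF h] A])
  have inF: "gR \<eta> \<in> source_fibre H (rr h)"
    using gR_facts[OF \<eta>(1)] rh by (simp add: source_fibre_def)
  have eq: "gR (mm (iv h) \<eta>) = mm (gR \<eta>) h"
  proof -
    have t: "ts (mm (iv h) \<eta>) = ts \<eta>" and ma: "mm (iv h) \<eta> \<in> arr" using ts_raA[OF \<eta>(1) h rh] by auto
    have cp: "ss (iv h) = rr \<eta>" using rh ha by (simp add: s_inv)
    have ivm: "iv (mm (iv h) \<eta>) = mm (iv \<eta>) h"
      using inv_mul[OF inv_arr[OF ha(1)] \<eta>(1) cp] inv_inv[OF ha(1)] by simp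
    have yY: "ts \<eta> \<in> YY" using \<eta> by simp
    have pa: "\<psi> (ts \<eta>) \<in> arr" "ss (\<psi> (ts \<eta>)) = ss \<eta>" using psi_in[OF yY] psi_ts[OF yY] by (auto simp: ts_eq)
    have c1: "ss (\<psi> (ts \<eta>)) = rr (iv \<eta>)" using pa \<eta> by (simp add: r_inv)
    have c2: "ss (iv \<eta>) = rr h" using rh \<eta> by (simp add: s_inv)
    show ?thesis unfolding gR_def t ivm using assoc[OF pa(1) inv_arr[OF \<eta>(1)] ha(1) c1 c2] by simp
  qed
  then have "indicator A (gR (mm (iv h) \<eta>)) = (indicator T (gR \<eta>) :: ennreal)"
    using inF unfolding T_def by (simp add: indicator_def)
  then show "emeasure (return (borel_of (g_top H)) (gR (fst (raA z h)))) A =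
         emeasure (return (borel_of (g_top H)) (gR (fst z))) {y \<in> source_fibre H (rr h). mm y h \<in> A}"
    using A T \<eta> unfolding T_def by simp
qed

lemma equivalence: "borel_equivalence G1 H ZZ rho laA sig raA"
  unfolding borel_equivalence_def
  using left_action left_free_G1 left_proper_G1 right_action right_free_H right_proper_H commute
    quotient_rho quotient_sig by blast

end

lemma main: "borel_equivalent G1 H TYPE('g \<times> 'g)"
proof -
  obtain \<psi> where psi: "\<forall>y\<in>YY. \<psi> y \<in> arr \<and> ts (\<psi> y) = y"
    "\<psi> \<in> measurable (borel_of (subtopology PT YY)) (borel_of TG)"
    using section_exists by blast
  have "borel_equivalence G1 H ZZ rho laA sig raA"
    by (rule equivalence[of \<psi>]) (use psi in auto)
  then show ?thesis unfolding borel_equivalent_def by blast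
qed

end

theorem proposition4p3:
  fixes G :: "('g,'u) tgroupoid"
    and c :: "'g \<Rightarrow> 'q::{topological_group_add, t2_space}"
  assumes "lc_groupoid G"
    and "second_countable (g_top G)"
    and "locally_Hausdorff (g_top G)"
    and "has_haar_system G"
    and "locally_compact_space (euclidean :: 'q topology)"
    and "continuous_map (g_top G) euclidean c"
    and "groupoid_hom_to G c"
    and "top_amenable (kernel_groupoid G c)"
  shows "borel_equivalent
           (restrict_groupoid (skew G c) (tilde_s G c ` g_arr G))
           (kernel_groupoid G c)
           TYPE('g \<times> 'g)"
proof -
  have "groupoid G" using assms(1) unfolding lc_groupoid_def topological_groupoid_def by simp
  then interpret setting G c
    by (unfold_locales) (use assms in auto)
  show ?thesis using main unfolding G1_def H_def .
qed


end
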